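(* Let $(\mathcal A,\varphi,\mathcal F,\Phi)$ be a ncps of type B$'$ with associated infinitesimal ncps $(\mathcal B,\varphi,\varphi')$. Let $(\mathcal A_i)_{i\in I}$ be subalgebras of $\mathcal A$ containing $1_{\mathcal A}$ and $(\mathcal F_j)_{j\in J}$ subalgebras of $\mathcal F$; set $\mathcal A_i':=\mathcal A_i\oplus\{0_{\mathcal F}\}\subseteq\mathcal B$ and $\mathcal F_j':=\mathbb C1_{\mathcal A}\oplus\mathcal F_j\subseteq\mathcal B$. Then: (A) $((\mathcal A_i)_{i\in I},(\mathcal F_j)_{j\in J})$ is B$'$-free in $(\mathcal A,\varphi,\mathcal F,\Phi)$ if and only if the subalgebras $\mathcal A_i'$ ($i\in I$), $\mathcal F_j'$ ($j\in J$) are infinitesimally free in $(\mathcal B,\varphi,\varphi')$. (B) Let $\mathcal F':=\mathbb C1_{\mathcal A}\oplus\langle\mathcal F_j: j\in J\rangle$ (where $\langle\mathcal F_j:j\in J\rangle$ is the subalgebra of $\mathcal F$ generated by all $\mathcal F_j$). Then $((\mathcal A_i)_{i\in I},(\mathcal F_j)_{j\in J})$ is weakly B$'$-free in $(\mathcal A,\varphi,\mathcal F,\Phi)$ if and only if the subalgebras $\mathcal A_i'$ ($i\in I$) and $\mathcal F'$ are infinitesimally free in $(\mathcal B,\varphi,\varphi')$.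
   Context: Ncps of type B$'$ $(\mathcal A,\varphi,\mathcal F,\Phi)$: $\mathcal A$ unital complex algebra, $\varphi:\mathcal A\to\mathbb C$ linear with $\varphi(1_{\mathcal A})=1$, $\mathcal F$ an algebra which is an $\mathcal A$-bimodule compatible with its multiplication, $\Phi:\mathcal F\to\mathbb C$ linear. $\mathcal B=\mathcal A\oplus\mathcal F$ with product $(a_1,f_1)(a_2,f_2)=(a_1a_2,a_1f_2+f_1a_2+f_1f_2)$ and unit $1_{\mathcal A}$; $\varphi(a+f):=\varphi(a)$, $\varphi'(a+f):=\Phi(f)$. Freeness of unital subalgebras $(\mathcal A_i)$ w.r.t. $\varphi$: $\varphi(c_1\cdots c_n)=0$ whenever $i_1\ne i_2\ne\cdots\ne i_n$, $c_l\in\mathcal A_{i_l}$, $\varphi(c_l)=0$. Cyclic-antimonotone independence of $(\mathcal A_0,\mathcal F_0)$: $\Phi(c_0g_1c_1\cdots c_{n-1}g_nc_n)=\varphi(c_0c_n)\prod_{l=1}^{n-1}\varphi(c_l)\,\Phi(g_1\cdots g_n)$ for all $n\ge1$, $c_l\in\mathcal A_0$, $g_l\in\mathcal F_0$. Trivial independence of $(\mathcal F_j)$: $\Phi(g_1\cdots g_n)=0$ whenever $n\ge2$, $j_1\ne\cdots\ne j_n$, $g_l\in\mathcal F_{j_l}$. $((\mathcal A_i),(\mathcal F_j))$ is weakly B$'$-free if $(\mathcal A_i)$ are free w.r.t. $\varphi$ and (algebra generated by all $\mathcal A_i$, algebra generated by all $\mathcal F_j$) is cyclic-antimonotone independent;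 it is B$'$-free if in addition $(\mathcal F_j)$ are trivially independent. Infinitesimal freeness of unital subalgebras $(\mathcal B_k)$ of $(\mathcal B,\varphi,\varphi')$: for $k_1\ne k_2\ne\cdots\ne k_n$ and $b_l\in\mathcal B_{k_l}$ with $\varphi(b_l)=0$, $\varphi(b_1\cdots b_n)=0$ and $\varphi'(b_1\cdots b_n)=\varphi(b_1b_n)\varphi(b_2b_{n-1})\cdots\varphi(b_{(n-1)/2}b_{(n+3)/2})\varphi'(b_{(n+1)/2})$ if $n$ is odd and $k_1=k_n,k_2=k_{n-1},\dots,k_{(n-1)/2}=k_{(n+3)/2}$, and $0$ otherwise. *)

theory Defs
  imports Main Complex_Main
begin

text \<open>The algebra A is a type 'a of class ring_1 together with a complex scalar
multiplication sa; the (possibly non-unital) algebra F is a type 'f of class ring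
with complex scalar multiplication sf; la / ra are the left / right A-actions on F.\<close>

definition complex_alg :: "(complex \<Rightarrow> 'r::ring \<Rightarrow> 'r) \<Rightarrow> bool" where
  "complex_alg s \<longleftrightarrow>
     (\<forall>c x y. s c (x + y) = s c x + s c y) \<and>
     (\<forall>c d x. s (c + d) x = s c x + s d x) \<and>
     (\<forall>c d x. s c (s d x) = s (c * d) x) \<and>
     (\<forall>x. s 1 x = x) \<and>
     (\<forall>c x y. s c (x * y) = s c x * y) \<and>
     (\<forall>c x y. s c (x * y) = x * s c y)"

definition lin_functional :: "(complex \<Rightarrow> 'r::ring \<Rightarrow> 'r) \<Rightarrow> ('r \<Rightarrow> complex) \<Rightarrow> bool" where
  "lin_functional s f \<longleftrightarrow> (\<forall>x y. f (x + y) = f x + f y) \<and> (\<forall>c x. f (s c x) = c * f x)"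

definition bimodule_compat ::
  "(complex \<Rightarrow> 'a::ring_1 \<Rightarrow> 'a) \<Rightarrow> (complex \<Rightarrow> 'f::ring \<Rightarrow> 'f) \<Rightarrow>
   ('a \<Rightarrow> 'f \<Rightarrow> 'f) \<Rightarrow> ('f \<Rightarrow> 'a \<Rightarrow> 'f) \<Rightarrow> bool" where
  "bimodule_compat sa sf la ra \<longleftrightarrow>
     (\<forall>f. la 1 f = f) \<and> (\<forall>f. ra f 1 = f) \<and>
     (\<forall>a b f. la (a * b) f = la a (la b f)) \<and>
     (\<forall>a b f. ra f (a * b) = ra (ra f a) b) \<and>
     (\<forall>a b f. la (a + b) f = la a f + la b f) \<and>
     (\<forall>a f g. la a (f + g) = la a f + la a g) \<and>
     (\<forall>a b f. ra f (a + b) = ra f a + ra f b) \<and>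
     (\<forall>a f g. ra (f + g) a = ra f a + ra g a) \<and>
     (\<forall>c a f. la (sa c a) f = sf c (la a f)) \<and>
     (\<forall>c a f. la a (sf c f) = sf c (la a f)) \<and>
     (\<forall>c a f. ra f (sa c a) = sf c (ra f a)) \<and>
     (\<forall>c a f. ra (sf c f) a = sf c (ra f a)) \<and>
     (\<forall>a b f. ra (la a f) b = la a (ra f b)) \<and>
     (\<forall>a f g. la a (f * g) = la a f * g) \<and>
     (\<forall>a f g. ra (f * g) a = f * ra g a) \<and>
     (\<forall>a f g. ra f a * g = f * la a g)"

definition ncps_B' ::
  "(complex \<Rightarrow> 'a::ring_1 \<Rightarrow> 'a) \<Rightarrow> ('a \<Rightarrow> complex) \<Rightarrow>
   (complex \<Rightarrow> 'f::ring \<Rightarrow> 'f) \<Rightarrow> ('a \<Rightarrow> 'f \<Rightarrow> 'f) \<Rightarrow> ('f \<Rightarrow> 'a \<Rightarrow> 'f) \<Rightarrow>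
   ('f \<Rightarrow> complex) \<Rightarrow> bool" where
  "ncps_B' sa phi sf la ra Phi \<longleftrightarrow>
     complex_alg sa \<and> complex_alg sf \<and> bimodule_compat sa sf la ra \<and>
     lin_functional sa phi \<and> phi 1 = 1 \<and> lin_functional sf Phi"

definition unital_subalg :: "(complex \<Rightarrow> 'a::ring_1 \<Rightarrow> 'a) \<Rightarrow> 'a set \<Rightarrow> bool" where
  "unital_subalg s S \<longleftrightarrow> 1 \<in> S \<and> (\<forall>x\<in>S. \<forall>y\<in>S. x + y \<in> S \<and> x * y \<in> S) \<and>
     (\<forall>c. \<forall>x\<in>S. s c x \<in> S)"

definition subalg :: "(complex \<Rightarrow> 'f::ring \<Rightarrow> 'f) \<Rightarrow> 'f set \<Rightarrow> bool" where
  "subalg s S \<longleftrightarrow> 0 \<in> S \<and> (\<forall>x\<in>S. \<forall>y\<in>S. x + y \<in> S \<and> x * y \<in> S) \<and>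
     (\<forall>c. \<forall>x\<in>S. s c x \<in> S)"

inductive_set gen_unital_alg :: "(complex \<Rightarrow> 'a::ring_1 \<Rightarrow> 'a) \<Rightarrow> 'a set \<Rightarrow> 'a set"
  for s :: "complex \<Rightarrow> 'a \<Rightarrow> 'a" and S :: "'a set" where
  gua_base: "x \<in> S \<Longrightarrow> x \<in> gen_unital_alg s S"
| gua_one: "1 \<in> gen_unital_alg s S"
| gua_add: "x \<in> gen_unital_alg s S \<Longrightarrow> y \<in> gen_unital_alg s S \<Longrightarrow> x + y \<in> gen_unital_alg s S"
| gua_mult: "x \<in> gen_unital_alg s S \<Longrightarrow> y \<in> gen_unital_alg s S \<Longrightarrow> x * y \<in> gen_unital_alg s S"
| gua_scale: "x \<in> gen_unital_alg s S \<Longrightarrow> s c x \<in> gen_unital_alg s S"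

inductive_set gen_alg :: "(complex \<Rightarrow> 'f::ring \<Rightarrow> 'f) \<Rightarrow> 'f set \<Rightarrow> 'f set"
  for s :: "complex \<Rightarrow> 'f \<Rightarrow> 'f" and S :: "'f set" where
  ga_base: "x \<in> S \<Longrightarrow> x \<in> gen_alg s S"
| ga_zero: "0 \<in> gen_alg s S"
| ga_add: "x \<in> gen_alg s S \<Longrightarrow> y \<in> gen_alg s S \<Longrightarrow> x + y \<in> gen_alg s S"
| ga_mult: "x \<in> gen_alg s S \<Longrightarrow> y \<in> gen_alg s S \<Longrightarrow> x * y \<in> gen_alg s S"
| ga_scale: "x \<in> gen_alg s S \<Longrightarrow> s c x \<in> gen_alg s S"

text \<open>Elements a + f of B are represented as pairs (a, f).\<close>
definition bmult :: "('a::ring_1 \<Rightarrow> 'f::ring \<Rightarrow> 'f) \<Rightarrow> ('f \<Rightarrow> 'a \<Rightarrow> 'f) \<Rightarrow>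
    'a \<times> 'f \<Rightarrow> 'a \<times> 'f \<Rightarrow> 'a \<times> 'f" where
  "bmult la ra x y = (fst x * fst y, la (fst x) (snd y) + ra (snd x) (fst y) + snd x * snd y)"

definition bprod :: "('a::ring_1 \<Rightarrow> 'f::ring \<Rightarrow> 'f) \<Rightarrow> ('f \<Rightarrow> 'a \<Rightarrow> 'f) \<Rightarrow>
    ('a \<times> 'f) list \<Rightarrow> 'a \<times> 'f" where
  "bprod la ra xs = foldr (bmult la ra) xs (1, 0)"

definition phiB :: "('a \<Rightarrow> complex) \<Rightarrow> 'a \<times> 'f \<Rightarrow> complex" where
  "phiB phi x = phi (fst x)"

definition phiB' :: "('f \<Rightarrow> complex) \<Rightarrow> 'a \<times> 'f \<Rightarrow> complex" where
  "phiB' Phi x = Phi (snd x)"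

text \<open>A_i' = A_i \<oplus> {0}, and C 1_A \<oplus> G for a subset G of F.\<close>
definition embA :: "'a set \<Rightarrow> ('a \<times> 'f::zero) set" where
  "embA S = (\<lambda>a. (a, 0)) ` S"

definition embF :: "(complex \<Rightarrow> 'a::ring_1 \<Rightarrow> 'a) \<Rightarrow> 'f set \<Rightarrow> ('a \<times> 'f) set" where
  "embF sa G = {(sa c 1, f) | c f. f \<in> G}"

definition alternating :: "'k list \<Rightarrow> bool" where
  "alternating ks \<longleftrightarrow> (\<forall>l. Suc l < length ks \<longrightarrow> ks ! l \<noteq> ks ! Suc l)"

fun fprod :: "'f::ring list \<Rightarrow> 'f" where
  "fprod [] = 0"
| "fprod [g] = g"
| "fprod (g # gs) = g * fprod gs"

definition free_family :: "('a::ring_1 \<Rightarrow> complex) \<Rightarrow> 'i set \<Rightarrow> ('i \<Rightarrow> 'a set) \<Rightarrow> bool" where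
  "free_family phi I A \<longleftrightarrow>
     (\<forall>ks cs. ks \<noteq> [] \<and> length cs = length ks \<and> set ks \<subseteq> I \<and> alternating ks \<and>
        (\<forall>l < length ks. cs ! l \<in> A (ks ! l) \<and> phi (cs ! l) = 0)
        \<longrightarrow> phi (prod_list cs) = 0)"

text \<open>The element c_0 g_1 c_1 \<cdots> c_{n-1} g_n c_n of B, as a list of factors.\<close>
fun interleave :: "'a::zero list \<Rightarrow> 'f list \<Rightarrow> ('a \<times> 'f::zero) list" where
  "interleave (c # cs) (g # gs) = (c, 0) # (0, g) # interleave cs gs"
| "interleave [c] [] = [(c, 0)]"
| "interleave _ _ = []"

text \<open>Cyclic-antimonotone independence of (A0, F0).  Lists cs = [c_0,...,c_n], gs = [g_1,...,g_n].
  The mixed product c_0 g_1 c_1 \<cdots> g_n c_n (an element of F) is computed in B.\<close>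
definition cyc_antimonotone ::
  "('a::ring_1 \<Rightarrow> complex) \<Rightarrow> ('a \<Rightarrow> 'f::ring \<Rightarrow> 'f) \<Rightarrow> ('f \<Rightarrow> 'a \<Rightarrow> 'f) \<Rightarrow> ('f \<Rightarrow> complex) \<Rightarrow>
   'a set \<Rightarrow> 'f set \<Rightarrow> bool" where
  "cyc_antimonotone phi la ra Phi A0 F0 \<longleftrightarrow>
     (\<forall>n cs gs. n \<ge> 1 \<and> length cs = n + 1 \<and> length gs = n \<and> set cs \<subseteq> A0 \<and> set gs \<subseteq> F0
        \<longrightarrow> Phi (snd (bprod la ra (interleave cs gs))) =
            phi (cs ! 0 * cs ! n) * (\<Prod>l\<in>{1..n-1}. phi (cs ! l)) * Phi (fprod gs))"

definition trivially_independent :: "('f::ring \<Rightarrow> complex) \<Rightarrow> 'j set \<Rightarrow> ('j \<Rightarrow> 'f set) \<Rightarrow> bool" where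
  "trivially_independent Phi J F \<longleftrightarrow>
     (\<forall>js gs. length js \<ge> 2 \<and> length gs = length js \<and> set js \<subseteq> J \<and> alternating js \<and>
        (\<forall>l < length js. gs ! l \<in> F (js ! l))
        \<longrightarrow> Phi (fprod gs) = 0)"

definition weakly_B'_free ::
  "(complex \<Rightarrow> 'a::ring_1 \<Rightarrow> 'a) \<Rightarrow> ('a \<Rightarrow> complex) \<Rightarrow> (complex \<Rightarrow> 'f::ring \<Rightarrow> 'f) \<Rightarrow>
   ('a \<Rightarrow> 'f \<Rightarrow> 'f) \<Rightarrow> ('f \<Rightarrow> 'a \<Rightarrow> 'f) \<Rightarrow> ('f \<Rightarrow> complex) \<Rightarrow>
   'i set \<Rightarrow> ('i \<Rightarrow> 'a set) \<Rightarrow> 'j set \<Rightarrow> ('j \<Rightarrow> 'f set) \<Rightarrow> bool" where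
  "weakly_B'_free sa phi sf la ra Phi I A J F \<longleftrightarrow>
     free_family phi I A \<and>
     cyc_antimonotone phi la ra Phi (gen_unital_alg sa (\<Union>i\<in>I. A i)) (gen_alg sf (\<Union>j\<in>J. F j))"

definition B'_free ::
  "(complex \<Rightarrow> 'a::ring_1 \<Rightarrow> 'a) \<Rightarrow> ('a \<Rightarrow> complex) \<Rightarrow> (complex \<Rightarrow> 'f::ring \<Rightarrow> 'f) \<Rightarrow>
   ('a \<Rightarrow> 'f \<Rightarrow> 'f) \<Rightarrow> ('f \<Rightarrow> 'a \<Rightarrow> 'f) \<Rightarrow> ('f \<Rightarrow> complex) \<Rightarrow>
   'i set \<Rightarrow> ('i \<Rightarrow> 'a set) \<Rightarrow> 'j set \<Rightarrow> ('j \<Rightarrow> 'f set) \<Rightarrow> bool" where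
  "B'_free sa phi sf la ra Phi I A J F \<longleftrightarrow>
     weakly_B'_free sa phi sf la ra Phi I A J F \<and> trivially_independent Phi J F"

text \<open>Infinitesimal freeness of (B_k)_{k \<in> K} in (B, phiB, phiB').  0-based indices:
  paper's b_l is bs!(l-1).\<close>
definition inf_free ::
  "('a::ring_1 \<Rightarrow> 'f::ring \<Rightarrow> 'f) \<Rightarrow> ('f \<Rightarrow> 'a \<Rightarrow> 'f) \<Rightarrow> ('a \<Rightarrow> complex) \<Rightarrow> ('f \<Rightarrow> complex) \<Rightarrow>
   'k set \<Rightarrow> ('k \<Rightarrow> ('a \<times> 'f) set) \<Rightarrow> bool" where
  "inf_free la ra phi Phi K B \<longleftrightarrow>
     (\<forall>ks bs. ks \<noteq> [] \<and> length bs = length ks \<and> set ks \<subseteq> K \<and> alternating ks \<and>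
        (\<forall>l < length ks. bs ! l \<in> B (ks ! l) \<and> phiB phi (bs ! l) = 0)
        \<longrightarrow> (let n = length ks in
              phiB phi (bprod la ra bs) = 0 \<and>
              phiB' Phi (bprod la ra bs) =
                (if odd n \<and> (\<forall>l < n div 2. ks ! l = ks ! (n - 1 - l))
                 then (\<Prod>l<n div 2. phiB phi (bmult la ra (bs ! l) (bs ! (n - 1 - l))))
                      * phiB' Phi (bs ! (n div 2))
                 else 0)))"

end

theory Submission
  imports Defs "HOL-Library.Product_Plus"
begin

locale bctx =
  fixes sa :: "complex \<Rightarrow> 'a::ring_1 \<Rightarrow> 'a" and phi :: "'a \<Rightarrow> complex"
    and sf :: "complex \<Rightarrow> 'f::ring \<Rightarrow> 'f"
    and la :: "'a \<Rightarrow> 'f \<Rightarrow> 'f" and ra :: "'f \<Rightarrow> 'a \<Rightarrow> 'f" and Phi :: "'f \<Rightarrow> complex"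
  assumes ncps: "ncps_B' sa phi sf la ra Phi"
begin

lemma sa_add: "sa c (x + y) = sa c x + sa c y"
  and sa_add2: "sa (c + d) x = sa c x + sa d x"
  and sa_sa: "sa c (sa d x) = sa (c * d) x"
  and sa_one: "sa 1 x = x"
  and sa_multl: "sa c (x * y) = sa c x * y"
  and sa_multr: "sa c (x * y) = x * sa c y"
  using ncps unfolding ncps_B'_def complex_alg_def by auto

lemma sf_add: "sf c (x + y) = sf c x + sf c y"
  and sf_add2: "sf (c + d) x = sf c x + sf d x"
  and sf_sf: "sf c (sf d x) = sf (c * d) x"
  and sf_one: "sf 1 x = x"
  and sf_multl: "sf c (x * y) = sf c x * y"
  and sf_multr: "sf c (x * y) = x * sf c y"
  using ncps unfolding ncps_B'_def complex_alg_def by auto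

lemma la_one: "la 1 f = f"
  and ra_one: "ra f 1 = f"
  and la_mult: "la (a * b) f = la a (la b f)"
  and ra_mult: "ra f (a * b) = ra (ra f a) b"
  and la_add1: "la (a + b) f = la a f + la b f"
  and la_add2: "la a (f + g) = la a f + la a g"
  and ra_add2: "ra f (a + b) = ra f a + ra f b"
  and ra_add1: "ra (f + g) a = ra f a + ra g a"
  and la_sa: "la (sa c a) f = sf c (la a f)"
  and la_sf: "la a (sf c f) = sf c (la a f)"
  and ra_sa: "ra f (sa c a) = sf c (ra f a)"
  and ra_sf: "ra (sf c f) a = sf c (ra f a)"
  and ra_la: "ra (la a f) b = la a (ra f b)"
  and la_multf: "la a (f * g) = la a f * g"
  and ra_multf: "ra (f * g) a = f * ra g a"
  and ra_mid: "ra f a * g = f * la a g"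
  using ncps unfolding ncps_B'_def bimodule_compat_def by auto

lemma phi_add: "phi (x + y) = phi x + phi y"
  and phi_sa: "phi (sa c x) = c * phi x"
  and phi_1: "phi 1 = 1"
  and Phi_add: "Phi (f + g) = Phi f + Phi g"
  and Phi_sf: "Phi (sf c f) = c * Phi f"
  using ncps unfolding ncps_B'_def lin_functional_def by auto

lemma phi_0[simp]: "phi 0 = 0"
  using phi_add[of 0 0] by simp
lemma Phi_0[simp]: "Phi 0 = 0"
  using Phi_add[of 0 0] by simp
lemma sa_0c[simp]: "sa c 0 = 0"
  using sa_add[of c 0 0] by simp
lemma sf_0c[simp]: "sf c 0 = 0"
  using sf_add[of c 0 0] by simp
lemma sa_c0[simp]: "sa 0 x = 0"
  using sa_add2[of 0 0 x] by simp
lemma sf_c0[simp]: "sf 0 x = 0"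
  using sf_add2[of 0 0 x] by simp
lemma la_0f[simp]: "la 0 f = 0"
  using la_add1[of 0 0 f] by simp
lemma la_a0[simp]: "la a 0 = 0"
  using la_add2[of a 0 0] by simp
lemma ra_0a[simp]: "ra 0 a = 0"
  using ra_add1[of 0 0 a] by simp
lemma ra_f0[simp]: "ra f 0 = 0"
  using ra_add2[of f 0 0] by simp
lemma sa_neg1: "sa (-1) x = - x"
proof -
  have "x + sa (-1) x = sa (1 + -1) x" by (simp only: sa_add2 sa_one)
  then have "x + sa (-1) x = 0" by simp
  then show ?thesis by (simp add: eq_neg_iff_add_eq_0 add.commute)
qed
lemma sf_neg1: "sf (-1) x = - x"
proof -
  have "x + sf (-1) x = sf (1 + -1) x" by (simp only: sf_add2 sf_one)
  then have "x + sf (-1) x = 0" by simp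
  then show ?thesis by (simp add: eq_neg_iff_add_eq_0 add.commute)
qed
lemma phi_sa1[simp]: "phi (sa c 1) = c"
  by (simp add: phi_sa phi_1)

definition bm where "bm = bmult la ra"
definition bsc :: "complex \<Rightarrow> 'a \<times> 'f \<Rightarrow> 'a \<times> 'f" where
  "bsc c x = (sa c (fst x), sf c (snd x))"
definition one :: "'a \<times> 'f" where "one = (1, 0)"
definition pB :: "'a \<times> 'f \<Rightarrow> complex" where "pB = phiB phi"
definition pB' :: "'a \<times> 'f \<Rightarrow> complex" where "pB' = phiB' Phi"

lemma fst_bm[simp]: "fst (bm x y) = fst x * fst y"
  and snd_bm[simp]: "snd (bm x y) = la (fst x) (snd y) + ra (snd x) (fst y) + snd x * snd y"
  by (simp_all add: bm_def bmult_def)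

lemma bm_Pair: "bm (a, f) (b, g) = (a * b, la a g + ra f b + f * g)"
  by (simp add: bm_def bmult_def)

lemma prod_eqI2: "fst x = fst y \<Longrightarrow> snd x = snd y \<Longrightarrow> x = y"
  by (simp add: prod_eq_iff)

lemma bm_assoc: "bm (bm x y) z = bm x (bm y z)"
  by (rule prod_eqI2) (simp_all add: mult.assoc la_add2 ra_add1 la_multf ra_multf ra_mid
      la_mult ra_la ra_mult distrib_left distrib_right add_ac)

lemma bm_one_left[simp]: "bm one x = x" and bm_one_right[simp]: "bm x one = x"
  by (simp_all add: one_def prod_eq_iff la_one ra_one)

lemma bm_add_left: "bm (x + y) z = bm x z + bm y z"
  and bm_add_right: "bm z (x + y) = bm z x + bm z y"
  by (simp_all add: prod_eq_iff distrib_left distrib_right la_add1 la_add2 ra_add1 ra_add2 add_ac)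

lemma bm_zero_left[simp]: "bm 0 x = 0" and bm_zero_right[simp]: "bm x 0 = 0"
  by (simp_all add: prod_eq_iff)

lemma sa_mid: "x * sa c y = sa c x * y"
  by (metis sa_multl sa_multr)
lemma sf_mid: "u * sf c v = sf c u * v"
  by (metis sf_multl sf_multr)

lemma bm_sc_left: "bm (bsc c x) y = bsc c (bm x y)"
  and bm_sc_right: "bm x (bsc c y) = bsc c (bm x y)"
  by (simp_all add: prod_eq_iff bsc_def sa_multl sa_multr la_sa la_sf ra_sa ra_sf sf_add
     sf_multl sf_multr sa_mid sf_mid)

lemma bsc_add: "bsc c (x + y) = bsc c x + bsc c y"
  and bsc_add2: "bsc (c + d) x = bsc c x + bsc d x"
  and bsc_bsc: "bsc c (bsc d x) = bsc (c * d) x"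
  and bsc_1[simp]: "bsc 1 x = x"
  and bsc_0[simp]: "bsc 0 x = 0"
  and bsc_0r[simp]: "bsc c 0 = 0"
  and bsc_neg1: "bsc (-1) x = - x"
  by (simp_all add: bsc_def prod_eq_iff sa_add sf_add sa_add2 sf_add2 sa_sa sf_sf sa_one sf_one
      sa_neg1 sf_neg1)

lemma pB_add: "pB (x + y) = pB x + pB y" and pB_sc: "pB (bsc c x) = c * pB x"
  and pB'_add: "pB' (x + y) = pB' x + pB' y" and pB'_sc: "pB' (bsc c x) = c * pB' x"
  and pB_one[simp]: "pB one = 1" and pB'_one[simp]: "pB' one = 0"
  and pB_0[simp]: "pB 0 = 0" and pB'_0[simp]: "pB' 0 = 0"
  by (simp_all add: pB_def pB'_def phiB_def phiB'_def bsc_def phi_add phi_sa Phi_add Phi_sf one_def phi_1)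

lemma pB_diff: fixes x y :: "'a \<times> 'f" shows "pB (x - y) = pB x - pB y"
  using pB_add[of "x - y" y] by simp
lemma pB'_diff: fixes x y :: "'a \<times> 'f" shows "pB' (x - y) = pB' x - pB' y"
  using pB'_add[of "x - y" y] by simp
lemma bm_diff_left: fixes x y :: "'a \<times> 'f" shows "bm (x - y) z = bm x z - bm y z"
  using bm_add_left[of "x - y" y z] by simp
lemma bm_diff_right: fixes x y :: "'a \<times> 'f" shows "bm z (x - y) = bm z x - bm z y"
  using bm_add_right[of z "x - y" y] by simp

lemma bprod_Nil[simp]: "bprod la ra [] = one"
  by (simp add: bprod_def one_def)
lemma bprod_Cons[simp]: "bprod la ra (x # xs) = bm x (bprod la ra xs)"
  by (simp add: bprod_def bm_def)
lemma bprod_append: "bprod la ra (xs @ ys) = bm (bprod la ra xs) (bprod la ra ys)"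
  by (induction xs) (simp_all add: bm_assoc)
lemma bprod_single[simp]: "bprod la ra [x] = x" by simp

end


lemma alt_Nil[simp]: "alternating []"
  by (simp add: alternating_def)

lemma alt_Cons: "alternating (x # xs) \<longleftrightarrow> (xs \<noteq> [] \<longrightarrow> x \<noteq> hd xs) \<and> alternating xs"
proof
  assume a: "alternating (x # xs)"
  have 1: "xs \<noteq> [] \<longrightarrow> x \<noteq> hd xs"
    using a[unfolded alternating_def, rule_format, of 0] by (cases xs) auto
  have "alternating xs" unfolding alternating_def
  proof (intro allI impI)
    fix l assume "Suc l < length xs"
    then show "xs ! l \<noteq> xs ! Suc l"
      using a[unfolded alternating_def, rule_format, of "Suc l"] by simp
  qed
  with 1 show "(xs \<noteq> [] \<longrightarrow> x \<noteq> hd xs) \<and> alternating xs" by simp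
next
  assume a: "(xs \<noteq> [] \<longrightarrow> x \<noteq> hd xs) \<and> alternating xs"
  show "alternating (x # xs)" unfolding alternating_def
  proof (intro allI impI)
    fix l assume l: "Suc l < length (x # xs)"
    show "(x # xs) ! l \<noteq> (x # xs) ! Suc l"
    proof (cases l)
      case 0
      then show ?thesis using a l by (cases xs) auto
    next
      case (Suc m)
      then show ?thesis using a l unfolding alternating_def by auto
    qed
  qed
qed

lemma alt_single[simp]: "alternating [x]"
  by (simp add: alternating_def)

lemma alt_Cons_Cons[simp]: "alternating (x # y # xs) \<longleftrightarrow> x \<noteq> y \<and> alternating (y # xs)"
  by (subst alt_Cons) simp

lemma alt_append: "alternating (xs @ ys) \<longleftrightarrow>
    alternating xs \<and> alternating ys \<and> (xs \<noteq> [] \<and> ys \<noteq> [] \<longrightarrow> last xs \<noteq> hd ys)"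
  by (induction xs) (auto simp: alt_Cons)

lemma alt_map: "inj_on f (set xs) \<Longrightarrow> alternating (map f xs) \<longleftrightarrow> alternating xs"
proof (induction xs)
  case Nil then show ?case by simp
next
  case (Cons x xs)
  then have "inj_on f (set xs)" by simp
  moreover have "xs \<noteq> [] \<Longrightarrow> f x = f (hd xs) \<longleftrightarrow> x = hd xs"
    using Cons.prems by (cases xs) (auto dest: inj_onD)
  ultimately show ?case using Cons by (simp add: alt_Cons hd_map)
qed

lemma prod_list_zero: "(0::'a::ring_1) \<in> set xs \<Longrightarrow> prod_list xs = 0"
  by (induction xs) auto

context bctx
begin

definition cw :: "'k set \<Rightarrow> ('k \<Rightarrow> ('a \<times> 'f) set) \<Rightarrow> ('k \<times> ('a \<times> 'f)) list \<Rightarrow> bool" where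
  "cw K Bf ws \<longleftrightarrow> alternating (map fst ws) \<and>
     (\<forall>p\<in>set ws. fst p \<in> K \<and> snd p \<in> Bf (fst p) \<and> pB (snd p) = 0)"

definition wp :: "('k \<times> ('a \<times> 'f)) list \<Rightarrow> 'a \<times> 'f" where
  "wp ws = bprod la ra (map snd ws)"

lemma wp_Nil[simp]: "wp [] = one" and wp_Cons: "wp (p # ws) = bm (snd p) (wp ws)"
  and wp_append: "wp (xs @ ys) = bm (wp xs) (wp ys)"
  and wp_single[simp]: "wp [p] = snd p"
  by (simp_all add: wp_def bprod_append)

lemma cw_Nil[simp]: "cw K Bf []" by (simp add: cw_def)

lemma cw_Cons: "cw K Bf (p # ws) \<longleftrightarrow> (ws \<noteq> [] \<longrightarrow> fst p \<noteq> fst (hd ws)) \<and>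
   fst p \<in> K \<and> snd p \<in> Bf (fst p) \<and> pB (snd p) = 0 \<and> cw K Bf ws"
  by (auto simp: cw_def alt_Cons hd_map)

lemma cw_append: "cw K Bf (xs @ ys) \<longleftrightarrow> cw K Bf xs \<and> cw K Bf ys \<and>
   (xs \<noteq> [] \<and> ys \<noteq> [] \<longrightarrow> fst (last xs) \<noteq> fst (hd ys))"
  by (auto simp: cw_def alt_append hd_map last_map)

lemma cw_single: "cw K Bf [p] \<longleftrightarrow> fst p \<in> K \<and> snd p \<in> Bf (fst p) \<and> pB (snd p) = 0"
  by (simp add: cw_def)

lemma cw_mono: "K \<subseteq> K' \<Longrightarrow> cw K Bf ws \<Longrightarrow> cw K' Bf ws"
  by (auto simp: cw_def)

lemma cw_restrict: "cw K Bf ws \<Longrightarrow> (\<forall>p\<in>set ws. P (fst p)) \<Longrightarrow> cw {k\<in>K. P k} Bf ws"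
  by (auto simp: cw_def)

inductive_set spn :: "('a \<times> 'f) set \<Rightarrow> ('a \<times> 'f) set" for X where
  spn_0: "0 \<in> spn X"
| spn_base: "x \<in> X \<Longrightarrow> x \<in> spn X"
| spn_add: "x \<in> spn X \<Longrightarrow> y \<in> spn X \<Longrightarrow> x + y \<in> spn X"
| spn_sc: "x \<in> spn X \<Longrightarrow> bsc c x \<in> spn X"

inductive_set genB :: "'k set \<Rightarrow> ('k \<Rightarrow> ('a \<times> 'f) set) \<Rightarrow> ('a \<times> 'f) set" for K Bf where
  genB_base: "k \<in> K \<Longrightarrow> x \<in> Bf k \<Longrightarrow> x \<in> genB K Bf"
| genB_one: "one \<in> genB K Bf"
| genB_add: "x \<in> genB K Bf \<Longrightarrow> y \<in> genB K Bf \<Longrightarrow> x + y \<in> genB K Bf"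
| genB_mult: "x \<in> genB K Bf \<Longrightarrow> y \<in> genB K Bf \<Longrightarrow> bm x y \<in> genB K Bf"
| genB_sc: "x \<in> genB K Bf \<Longrightarrow> bsc c x \<in> genB K Bf"

lemma genB_mono: assumes "x \<in> genB K Bf" "K \<subseteq> K'" shows "x \<in> genB K' Bf"
  using assms(1) by (induction rule: genB.induct) (use assms(2) in \<open>auto intro: genB.intros\<close>)

lemma genB_diff: "x \<in> genB K Bf \<Longrightarrow> y \<in> genB K Bf \<Longrightarrow> x - y \<in> genB K Bf"
  using genB_add[OF _ genB_sc[of y K Bf "-1"], of x] by (simp add: bsc_neg1)

definition subalgB :: "('a \<times> 'f) set \<Rightarrow> bool" where
  "subalgB S \<longleftrightarrow> one \<in> S \<and> (\<forall>x\<in>S. \<forall>y\<in>S. x + y \<in> S \<and> bm x y \<in> S) \<and> (\<forall>c. \<forall>x\<in>S. bsc c x \<in> S)"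

lemma subalgB_diff: "subalgB S \<Longrightarrow> x \<in> S \<Longrightarrow> y \<in> S \<Longrightarrow> x - y \<in> S"
  unfolding subalgB_def by (metis bsc_neg1 diff_conv_add_uminus)

definition lin :: "('a \<times> 'f \<Rightarrow> complex) \<Rightarrow> bool" where
  "lin f \<longleftrightarrow> (\<forall>x y. f (x + y) = f x + f y) \<and> (\<forall>c x. f (bsc c x) = c * f x)"

lemma spn_zero: assumes "lin f" "\<forall>x\<in>X. f x = 0" "x \<in> spn X" shows "f x = 0"
  using assms(3)
proof (induction rule: spn.induct)
  case spn_0
  have "f (0 + 0) = f 0 + f 0" using assms(1) unfolding lin_def by blast
  then show ?case by simp
next
  case (spn_base x) then show ?case using assms(2) by simp
next
  case (spn_add x y) then show ?case using assms(1) unfolding lin_def by (metis add_0)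
next
  case (spn_sc x c) then show ?case using assms(1) unfolding lin_def by (metis mult_zero_right)
qed

lemma lin_pB: "lin pB" and lin_pB': "lin pB'"
  by (simp_all add: lin_def pB_add pB_sc pB'_add pB'_sc)

lemma lin_comp: assumes "lin f" shows "lin (\<lambda>v. f (bm L (bm v R)))"
proof -
  have a: "\<And>x y. f (x + y) = f x + f y" and s: "\<And>c x. f (bsc c x) = c * f x"
    using assms unfolding lin_def by blast+
  show ?thesis unfolding lin_def
    by (simp add: a s bm_add_left bm_add_right bm_sc_left bm_sc_right del: split_paired_All)
qed

lemma lin_compL: "lin f \<Longrightarrow> lin (\<lambda>v. f (bm v R))"
  using lin_comp[of f one R] by simp

lemma lin_compR: "lin f \<Longrightarrow> lin (\<lambda>v. f (bm L v))"
  using lin_comp[of f L one] by simp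

lemma lin_diff: "lin f \<Longrightarrow> lin g \<Longrightarrow> lin (\<lambda>v. f v - g v)"
  unfolding lin_def by (simp add: algebra_simps del: split_paired_All)

lemma lin_cmult: "lin f \<Longrightarrow> lin (\<lambda>v. f v * d)"
  unfolding lin_def by (simp add: algebra_simps del: split_paired_All)

definition SP where "SP K Bf = spn {wp w | w. cw K Bf w}"
definition WS where "WS K Bf = {wp w | w. cw K Bf w \<and> w \<noteq> []}"

lemma SP_word: "cw K Bf w \<Longrightarrow> wp w \<in> SP K Bf"
  unfolding SP_def by (auto intro: spn_base)

lemma SP_one: "one \<in> SP K Bf"
  using SP_word[of K Bf "[]"] by simp

lemma merge:
  assumes sub: "\<forall>k\<in>K. subalgB (Bf k)"
    and c1: "cw K Bf (u @ [a])" and c2: "cw K Bf (b # v)" and eq: "fst a = fst b"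
  defines "\<beta> \<equiv> pB (bm (snd a) (snd b))"
  defines "z \<equiv> bm (snd a) (snd b) - bsc \<beta> one"
  shows "cw K Bf (u @ [(fst a, z)] @ v) \<and>
     bm (wp (u @ [a])) (wp (b # v)) = bsc \<beta> (bm (wp u) (wp v)) + wp (u @ [(fst a, z)] @ v)"
proof
  have ka: "fst a \<in> K" "snd a \<in> Bf (fst a)" "snd b \<in> Bf (fst a)"
    using c1 c2 eq by (auto simp: cw_append cw_Cons)
  have S: "subalgB (Bf (fst a))" using sub ka by blast
  have zin: "z \<in> Bf (fst a)" unfolding z_def
    using S ka by (intro subalgB_diff) (auto simp: subalgB_def)
  have zc: "pB z = 0" unfolding z_def \<beta>_def by (simp add: pB_diff pB_sc)
  show "cw K Bf (u @ [(fst a, z)] @ v)"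
    using c1 c2 eq ka zin zc by (auto simp: cw_append cw_Cons cw_single)
  have "bm (wp (u @ [a])) (wp (b # v)) = bm (wp u) (bm (bm (snd a) (snd b)) (wp v))"
    by (simp add: wp_append wp_Cons bm_assoc)
  also have "bm (snd a) (snd b) = bsc \<beta> one + z" unfolding z_def by simp
  also have "bm (wp u) (bm (bsc \<beta> one + z) (wp v)) = bsc \<beta> (bm (wp u) (wp v)) + bm (wp u) (bm z (wp v))"
    by (simp add: bm_add_left bm_add_right bm_sc_left bm_sc_right)
  also have "bm (wp u) (bm z (wp v)) = wp (u @ [(fst a, z)] @ v)"
    by (simp add: wp_append wp_Cons)
  finally show "bm (wp (u @ [a])) (wp (b # v)) = bsc \<beta> (bm (wp u) (wp v)) + wp (u @ [(fst a, z)] @ v)" .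
qed

lemma WW:
  assumes sub: "\<forall>k\<in>K. subalgB (Bf k)"
  shows "cw K Bf w1 \<Longrightarrow> cw K Bf w2 \<Longrightarrow> bm (wp w1) (wp w2) \<in> SP K Bf"
proof (induction w1 arbitrary: w2 rule: rev_induct)
  case Nil then show ?case by (simp add: SP_word)
next
  case (snoc a u)
  show ?case
  proof (cases w2)
    case Nil then show ?thesis using snoc by (simp add: SP_word)
  next
    case (Cons b v)
    show ?thesis
    proof (cases "fst a = fst b")
      case False
      have "cw K Bf ((u @ [a]) @ w2)" by (subst cw_append) (use snoc Cons False in simp)
      then have "wp ((u @ [a]) @ w2) \<in> SP K Bf" by (rule SP_word)
      then show ?thesis by (simp only: wp_append)
    next
      case True
      note m = merge[OF sub snoc(2) snoc(3)[unfolded Cons] True]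
      have "cw K Bf u" "cw K Bf v" using snoc(2) snoc(3) Cons by (auto simp: cw_append cw_Cons)
      then have "bm (wp u) (wp v) \<in> SP K Bf" using snoc(1) by blast
      then show ?thesis using m unfolding Cons SP_def
        by (auto intro: spn_add spn_sc spn_base)
    qed
  qed
qed

lemma SP_mult:
  assumes sub: "\<forall>k\<in>K. subalgB (Bf k)" and x: "x \<in> SP K Bf" and y: "y \<in> SP K Bf"
  shows "bm x y \<in> SP K Bf"
proof -
  have "\<forall>y\<in>SP K Bf. bm x y \<in> SP K Bf"
    using x unfolding SP_def
  proof (induction rule: spn.induct)
    case spn_0 then show ?case by (simp add: spn.spn_0)
  next
    case (spn_base x)
    then obtain w1 where w1: "x = wp w1" "cw K Bf w1" by auto
    show ?case
    proof
      fix y assume "y \<in> spn {wp w |w. cw K Bf w}"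
      then show "bm x y \<in> spn {wp w |w. cw K Bf w}"
      proof (induction rule: spn.induct)
        case spn_0 then show ?case by (simp add: spn.spn_0)
      next
        case (spn_base y)
        then show ?case using WW[OF sub w1(2)] w1(1) unfolding SP_def by auto
      next
        case (spn_add y1 y2) then show ?case by (simp add: bm_add_right spn.spn_add)
      next
        case (spn_sc y c) then show ?case by (simp add: bm_sc_right spn.spn_sc)
      qed
    qed
  next
    case (spn_add x1 x2) then show ?case by (simp add: bm_add_left spn.spn_add)
  next
    case (spn_sc x c) then show ?case by (simp add: bm_sc_left spn.spn_sc)
  qed
  then show ?thesis using y by blast
qed

lemma genB_SP:
  assumes sub: "\<forall>k\<in>K. subalgB (Bf k)"
  shows "x \<in> genB K Bf \<Longrightarrow> x \<in> SP K Bf"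
proof (induction rule: genB.induct)
  case (genB_base k x)
  define z where "z = x - bsc (pB x) one"
  have S: "subalgB (Bf k)" using sub genB_base by blast
  have "z \<in> Bf k" unfolding z_def using S genB_base by (intro subalgB_diff) (auto simp: subalgB_def)
  moreover have "pB z = 0" unfolding z_def by (simp add: pB_diff pB_sc)
  ultimately have "wp [(k, z)] \<in> SP K Bf" using genB_base by (intro SP_word) (simp add: cw_single)
  moreover have "x = bsc (pB x) one + wp [(k, z)]" by (simp add: z_def)
  ultimately show ?case using SP_one unfolding SP_def
    by (metis (no_types) spn.spn_add spn.spn_sc)
next
  case genB_one then show ?case by (rule SP_one)
next
  case (genB_add x y) then show ?case unfolding SP_def by (blast intro: spn.spn_add)
next
  case (genB_mult x y) then show ?case using SP_mult[OF sub] by blast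
next
  case (genB_sc x c) then show ?case unfolding SP_def by (blast intro: spn.spn_sc)
qed

lemma SP_decomp:
  "x \<in> SP K Bf \<Longrightarrow> \<exists>\<alpha> s. x = bsc \<alpha> one + s \<and> s \<in> spn (WS K Bf)"
  unfolding SP_def
proof (induction rule: spn.induct)
  case spn_0 then show ?case by (intro exI[of _ 0]) (auto intro: spn.spn_0)
next
  case (spn_base x)
  then obtain w where w: "x = wp w" "cw K Bf w" by auto
  show ?case
  proof (cases "w = []")
    case True then show ?thesis using w by (intro exI[of _ 1] exI[of _ 0]) (auto intro: spn.spn_0)
  next
    case False then show ?thesis using w
      by (intro exI[of _ 0] exI[of _ x]) (auto intro: spn.spn_base simp: WS_def)
  qed
next
  case (spn_add x y)
  then obtain a1 s1 a2 s2 where "x = bsc a1 one + s1" "s1 \<in> spn (WS K Bf)"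
    "y = bsc a2 one + s2" "s2 \<in> spn (WS K Bf)" by blast
  moreover have "bsc a1 one + s1 + (bsc a2 one + s2) = bsc (a1 + a2) one + (s1 + s2)"
    by (simp only: bsc_add2 add_ac)
  ultimately show ?case by (intro exI[of _ "a1 + a2"] exI[of _ "s1 + s2"])
     (simp add: spn.spn_add)
next
  case (spn_sc x c)
  then obtain a1 s1 where "x = bsc a1 one + s1" "s1 \<in> spn (WS K Bf)" by blast
  then show ?case by (intro exI[of _ "c * a1"] exI[of _ "bsc c s1"])
     (simp add: bsc_add bsc_bsc spn.spn_sc)
qed

lemma spn_WS_pB:
  assumes H0: "\<forall>w. cw K Bf w \<and> w \<noteq> [] \<longrightarrow> pB (wp w) = 0"
  shows "s \<in> spn (WS K Bf) \<Longrightarrow> pB s = 0"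
  using spn_zero[OF lin_pB, of "WS K Bf" s] H0 unfolding WS_def by blast

lemma SP_centered:
  assumes H0: "\<forall>w. cw K Bf w \<and> w \<noteq> [] \<longrightarrow> pB (wp w) = 0"
    and x: "x \<in> SP K Bf" and c: "pB x = 0"
  shows "x \<in> spn (WS K Bf)"
proof -
  obtain \<alpha> s where xs: "x = bsc \<alpha> one + s" "s \<in> spn (WS K Bf)" using SP_decomp[OF x] by blast
  have "pB s = 0" using spn_WS_pB[OF H0 xs(2)] .
  then have "\<alpha> = 0" using c xs(1) by (simp add: pB_add pB_sc)
  then show ?thesis using xs by simp
qed

definition pf :: "'k \<times> ('a \<times> 'f) \<Rightarrow> 'k \<times> ('a \<times> 'f) \<Rightarrow> complex" where
  "pf p q = (if fst p = fst q then pB (bm (snd p) (snd q)) else 0)"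

definition mv :: "('k \<times> ('a \<times> 'f)) list \<Rightarrow> ('k \<times> ('a \<times> 'f)) list \<Rightarrow> complex" where
  "mv xs ys = (if length xs = length ys then prod_list (map (\<lambda>(p, q). pf p q) (zip xs ys)) else 0)"

lemma mv_Nil[simp]: "mv [] [] = 1" and mv_Nil1: "mv [] (q # ys) = 0" and mv_Nil2: "mv (p # xs) [] = 0"
  and mv_Cons: "mv (p # xs) (q # ys) = pf p q * mv xs ys"
  by (simp_all add: mv_def)

lemma mv_snoc: "mv (xs @ [p]) (ys @ [q]) = mv xs ys * pf p q"
  by (simp add: mv_def mult.commute)

lemma mv_Nil_left: "mv [] ys = (if ys = [] then 1 else 0)"
  by (cases ys) (simp_all add: mv_Nil1)
lemma mv_Nil_right: "mv xs [] = (if xs = [] then 1 else 0)"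
  by (cases xs) (simp_all add: mv_Nil2)

lemma L_lemma:
  assumes sub: "\<forall>k\<in>K. subalgB (Bf k)"
    and H0: "\<forall>w. cw K Bf w \<and> w \<noteq> [] \<longrightarrow> pB (wp w) = 0"
  shows "cw K Bf u \<Longrightarrow> cw K Bf v \<Longrightarrow> pB (bm (wp u) (wp v)) = mv u (rev v)"
proof (induction u arbitrary: v rule: rev_induct)
  case Nil then show ?case using H0 by (auto simp: mv_Nil_left)
next
  case (snoc a u)
  show ?case
  proof (cases v)
    case Nil then show ?thesis using H0 snoc by (simp add: mv_Nil_right)
  next
    case (Cons b v')
    show ?thesis
    proof (cases "fst a = fst b")
      case False
      have "cw K Bf ((u @ [a]) @ v)" by (subst cw_append) (use snoc Cons False in simp)
      then have "pB (wp ((u @ [a]) @ v)) = 0" using H0 by blast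
      then have "pB (bm (wp (u @ [a])) (wp v)) = 0" by (simp only: wp_append)
      moreover have "mv (u @ [a]) (rev v) = 0" using False Cons by (simp add: mv_snoc pf_def)
      ultimately show ?thesis by simp
    next
      case True
      note m = merge[OF sub snoc(2) snoc(3)[unfolded Cons] True]
      have "cw K Bf u" "cw K Bf v'" using snoc(2) snoc(3) Cons by (auto simp: cw_append cw_Cons)
      then have ih: "pB (bm (wp u) (wp v')) = mv u (rev v')" using snoc(1) by blast
      have "pB (wp (u @ [(fst a, bm (snd a) (snd b) - bsc (pB (bm (snd a) (snd b))) one)] @ v')) = 0"
        using H0 m by blast
      then show ?thesis using m ih True unfolding Cons
        by (simp add: pB_add pB_sc mv_snoc pf_def)
    qed
  qed
qed

end


context bctx
begin

definition pv :: "'k list \<Rightarrow> ('a \<times> 'f) list \<Rightarrow> complex" where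
  "pv ks bs = (let n = length ks in
     if odd n \<and> (\<forall>l < n div 2. ks ! l = ks ! (n - 1 - l))
     then (\<Prod>l<n div 2. phiB phi (bmult la ra (bs ! l) (bs ! (n - 1 - l)))) * phiB' Phi (bs ! (n div 2))
     else 0)"

definition pvw :: "('k \<times> ('a \<times> 'f)) list \<Rightarrow> complex" where
  "pvw ws = pv (map fst ws) (map snd ws)"

lemma inf_free_alt: "inf_free la ra phi Phi K Bf \<longleftrightarrow>
  (\<forall>ks bs. ks \<noteq> [] \<and> length bs = length ks \<and> set ks \<subseteq> K \<and> alternating ks \<and>
        (\<forall>l < length ks. bs ! l \<in> Bf (ks ! l) \<and> phiB phi (bs ! l) = 0)
        \<longrightarrow> phiB phi (bprod la ra bs) = 0 \<and> phiB' Phi (bprod la ra bs) = pv ks bs)"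
  unfolding inf_free_def pv_def Let_def by simp

lemma inf_free_ws: "inf_free la ra phi Phi K Bf \<longleftrightarrow>
  (\<forall>ws. ws \<noteq> [] \<and> cw K Bf ws \<longrightarrow> pB (wp ws) = 0 \<and> pB' (wp ws) = pvw ws)"
proof
  assume H: "inf_free la ra phi Phi K Bf"
  show "\<forall>ws. ws \<noteq> [] \<and> cw K Bf ws \<longrightarrow> pB (wp ws) = 0 \<and> pB' (wp ws) = pvw ws"
  proof (intro allI impI)
    fix ws assume a: "ws \<noteq> [] \<and> cw K Bf ws"
    have "\<forall>l < length ws. snd (ws ! l) \<in> Bf (fst (ws ! l)) \<and> phiB phi (snd (ws ! l)) = 0"
      using a nth_mem unfolding cw_def pB_def by blast
    moreover have "set (map fst ws) \<subseteq> K" using a unfolding cw_def by auto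
    ultimately show "pB (wp ws) = 0 \<and> pB' (wp ws) = pvw ws"
      using H[unfolded inf_free_alt, rule_format, of "map fst ws" "map snd ws"] a
      unfolding cw_def wp_def pvw_def pB_def pB'_def by auto
  qed
next
  assume H: "\<forall>ws. ws \<noteq> [] \<and> cw K Bf ws \<longrightarrow> pB (wp ws) = 0 \<and> pB' (wp ws) = pvw ws"
  show "inf_free la ra phi Phi K Bf" unfolding inf_free_alt
  proof (intro allI impI)
    fix ks bs
    assume a: "ks \<noteq> [] \<and> length bs = length ks \<and> set ks \<subseteq> K \<and> alternating ks \<and>
        (\<forall>l < length ks. bs ! l \<in> Bf (ks ! l) \<and> phiB phi (bs ! l) = 0)"
    define ws where "ws = zip ks bs"
    have m1: "map fst ws = ks" and m2: "map snd ws = bs" using a by (simp_all add: ws_def)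
    have "cw K Bf ws" unfolding cw_def
    proof
      show "alternating (map fst ws)" using m1 a by simp
      show "\<forall>p\<in>set ws. fst p \<in> K \<and> snd p \<in> Bf (fst p) \<and> pB (snd p) = 0"
      proof
        fix p assume "p \<in> set ws"
        then obtain i where "i < length ks" "p = (ks ! i, bs ! i)"
          using a unfolding ws_def set_zip by auto
        then show "fst p \<in> K \<and> snd p \<in> Bf (fst p) \<and> pB (snd p) = 0"
          using a nth_mem unfolding pB_def by fastforce
      qed
    qed
    moreover have "ws \<noteq> []" using a m1 by auto
    ultimately have "pB (wp ws) = 0 \<and> pB' (wp ws) = pvw ws" using H by blast
    then show "phiB phi (bprod la ra bs) = 0 \<and> phiB' Phi (bprod la ra bs) = pv ks bs"
      unfolding wp_def pvw_def pB_def pB'_def m1 m2 .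
  qed
qed

lemma pv_Nil[simp]: "pv [] bs = 0" by (simp add: pv_def)
lemma pv_single: "pv [k] [x] = pB' x" by (simp add: pv_def pB'_def)

lemma pv_rec:
  assumes len: "length bs = length ks"
  shows "pv (k1 # ks @ [k2]) (b1 # bs @ [b2]) =
    (if k1 = k2 then pB (bm b1 b2) else 0) * pv ks bs"
proof -
  define m where "m = length ks"
  define K' where "K' = k1 # ks @ [k2]"
  define B' where "B' = b1 # bs @ [b2]"
  have lK: "length K' = m + 2" by (simp add: K'_def m_def)
  have dv: "(m + 2) div 2 = Suc (m div 2)" by simp
  have K0: "K' ! 0 = k1" and Kl: "K' ! (m + 2 - 1 - 0) = k2" by (simp_all add: K'_def m_def nth_append)
  have B0: "B' ! 0 = b1" and Bl: "B' ! (m + 2 - 1 - 0) = b2"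
    by (simp_all add: B'_def m_def len nth_append)
  have KS: "K' ! Suc l = ks ! l" if "l < m" for l using that by (simp add: K'_def m_def nth_append)
  have KR: "K' ! (m + 2 - 1 - Suc l) = ks ! (m - 1 - l)" if "l < m" for l
  proof -
    have "m + 2 - 1 - Suc l = Suc (m - 1 - l)" using that by simp
    moreover have "m - 1 - l < length ks" "length ks - Suc l < length ks" using that m_def by auto
    ultimately show ?thesis using that by (simp add: K'_def m_def nth_append)
  qed
  have BS: "B' ! Suc l = bs ! l" if "l < m" for l using that len by (simp add: B'_def m_def nth_append)
  have BR: "B' ! (m + 2 - 1 - Suc l) = bs ! (m - 1 - l)" if "l < m" for l
  proof -
    have "m + 2 - 1 - Suc l = Suc (m - 1 - l)" using that by simp
    moreover have "m - 1 - l < length bs" "length bs - Suc l < length bs" using that m_def len by auto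
    ultimately show ?thesis using that len by (simp add: B'_def m_def nth_append)
  qed
  have BR2: "B' ! (m - l) = bs ! (m - Suc l)" if "l < m" for l
    using BR[OF that] that by (simp add: numeral_2_eq_2)
  have pvks: "pv ks bs = (if odd m \<and> (\<forall>l < m div 2. ks ! l = ks ! (m - 1 - l))
     then (\<Prod>l<m div 2. pB (bm (bs ! l) (bs ! (m - 1 - l)))) * pB' (bs ! (m div 2)) else 0)"
    unfolding pv_def m_def pB_def pB'_def bm_def Let_def by presburger
  have pvK: "pv K' B' = (if odd m \<and> (\<forall>l < Suc (m div 2). K' ! l = K' ! (m + 2 - 1 - l))
     then (\<Prod>l<Suc (m div 2). pB (bm (B' ! l) (B' ! (m + 2 - 1 - l)))) * pB' (B' ! Suc (m div 2)) else 0)"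
  proof -
    have oo: "odd (m + 2) = odd m" by simp
    show ?thesis unfolding pv_def Let_def lK dv pB_def pB'_def bm_def oo by (rule refl)
  qed
  have hm: "l < m div 2 \<Longrightarrow> l < m" for l by simp
  have shift: "\<And>P M. (\<forall>l<Suc M. P l) = (P 0 \<and> (\<forall>l<M. P (Suc l)))"
    by (auto simp: less_Suc_eq_0_disj)
  have allS: "(\<forall>l < Suc (m div 2). K' ! l = K' ! (m + 2 - 1 - l)) \<longleftrightarrow>
     k1 = k2 \<and> (\<forall>l < m div 2. ks ! l = ks ! (m - 1 - l))"
    unfolding shift using K0 Kl KS KR hm by auto
  show ?thesis
  proof (cases "odd m \<and> (\<forall>l < Suc (m div 2). K' ! l = K' ! (m + 2 - 1 - l))")
    case True
    then have k12: "k1 = k2" and pal: "\<forall>l < m div 2. ks ! l = ks ! (m - 1 - l)" and om: "odd m"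
      using allS by auto
    have mpos: "m div 2 < m" using om by (cases m) auto
    have "(\<Prod>l<Suc (m div 2). pB (bm (B' ! l) (B' ! (m + 2 - 1 - l)))) =
        pB (bm (B' ! 0) (B' ! (m + 2 - 1 - 0))) * (\<Prod>l<m div 2. pB (bm (B' ! Suc l) (B' ! (m + 2 - 1 - Suc l))))"
      by (rule prod.lessThan_Suc_shift)
    also have "(\<Prod>l<m div 2. pB (bm (B' ! Suc l) (B' ! (m + 2 - 1 - Suc l)))) =
        (\<Prod>l<m div 2. pB (bm (bs ! l) (bs ! (m - 1 - l))))"
      by (rule prod.cong) (simp_all add: BS BR BR2 hm)
    finally show ?thesis using True k12 pal om pvK pvks B0 Bl BS[OF mpos]
      unfolding K'_def[symmetric] B'_def[symmetric] by simp
  next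
    case False
    then show ?thesis using pvK pvks allS unfolding K'_def[symmetric] B'_def[symmetric] by auto
  qed
qed

lemma pvw_rec: "pvw (a # mid @ [b]) = pf a b * pvw mid"
proof -
  have "pvw (a # mid @ [b]) = pv (fst a # map fst mid @ [fst b]) (snd a # map snd mid @ [snd b])"
    by (simp add: pvw_def)
  also have "\<dots> = (if fst a = fst b then pB (bm (snd a) (snd b)) else 0) * pv (map fst mid) (map snd mid)"
    by (rule pv_rec) simp
  finally show ?thesis by (simp add: pvw_def pf_def)
qed

lemma pvw_Nil[simp]: "pvw [] = 0" by (simp add: pvw_def)
lemma pvw_single: "pvw [p] = pB' (snd p)" by (simp add: pvw_def pv_single)

lemma list_two_cases: assumes "2 \<le> length ws" shows "\<exists>a mid b. ws = a # mid @ [b]"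
proof -
  obtain a ws' where ws: "ws = a # ws'" using assms by (cases ws) auto
  then have "ws' \<noteq> []" using assms by auto
  then obtain mid b where "ws' = mid @ [b]" by (metis rev_exhaust)
  then show ?thesis using ws by blast
qed

lemma PAL:
  "k \<notin> fst ` set u \<Longrightarrow> k \<notin> fst ` set v \<Longrightarrow> pvw (u @ [(k, x)] @ v) = mv u (rev v) * pB' x"
proof (induction u arbitrary: v)
  case Nil
  show ?case
  proof (cases v rule: rev_exhaust)
    case Nil then show ?thesis by (simp add: pvw_single)
  next
    case (snoc v' b)
    have "fst b \<noteq> k" using Nil.prems snoc by auto
    then show ?thesis using pvw_rec[of "(k, x)" v' b] snoc by (simp add: pf_def mv_Nil1)
  qed
next
  case (Cons a u')
  show ?case
  proof (cases v rule: rev_exhaust)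
    case Nil
    have "fst a \<noteq> k" using Cons.prems by auto
    then show ?thesis using pvw_rec[of a u' "(k, x)"] Nil by (simp add: pf_def mv_Nil2)
  next
    case (snoc v' b)
    have ih: "pvw (u' @ [(k, x)] @ v') = mv u' (rev v') * pB' x"
      using Cons snoc by simp
    have "pvw ((a # u') @ [(k, x)] @ v) = pf a b * pvw (u' @ [(k, x)] @ v')"
      using pvw_rec[of a "u' @ [(k, x)] @ v'" b] snoc by simp
    then show ?thesis using ih snoc by (simp add: mv_Cons)
  qed
qed

lemma PAL0:
  assumes "\<forall>p\<in>set ws. isF (fst p) \<longrightarrow> fst (snd p) = 0"
    and "ws = p1 @ [y1] @ q @ [y2] @ r" and "isF (fst y1)" and "isF (fst y2)"
  shows "pvw ws = 0"
  using assms
proof (induction "length ws" arbitrary: ws p1 r rule: less_induct)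
  case less
  have "2 \<le> length ws" using less.prems(2) by simp
  then obtain a mid b where ws: "ws = a # mid @ [b]" using list_two_cases by blast
  show ?case
  proof (cases "p1 = [] \<or> r = []")
    case True
    then have "(isF (fst a) \<and> fst (snd a) = 0) \<or> (isF (fst b) \<and> fst (snd b) = 0)"
      using less.prems ws by (cases "p1 = []") (auto simp: Cons_eq_append_conv append_eq_Cons_conv)
    then have "pf a b = 0" by (auto simp: pf_def pB_def phiB_def)
    then show ?thesis using ws pvw_rec[of a mid b] by simp
  next
    case False
    then obtain p1' r' where "p1 = a # p1'" "r = r' @ [b]" "mid = p1' @ [y1] @ q @ [y2] @ r'"
      using less.prems(2) ws
      by (cases p1; cases r rule: rev_exhaust) auto
    moreover have "\<forall>p\<in>set mid. isF (fst p) \<longrightarrow> fst (snd p) = 0" using less.prems(1) ws by auto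
    ultimately have "pvw mid = 0" using less.hyps[of mid p1' r'] less.prems ws by simp
    then show ?thesis using ws pvw_rec[of a mid b] by simp
  qed
qed

lemma PV0:
  assumes "\<forall>p\<in>set ws. snd (snd p) = 0"
  shows "pvw ws = 0"
  using assms
proof (induction "length ws" arbitrary: ws rule: less_induct)
  case less
  show ?case
  proof (cases "2 \<le> length ws")
    case True
    then obtain a mid b where ws: "ws = a # mid @ [b]" using list_two_cases by blast
    then have "pvw mid = 0" using less by auto
    then show ?thesis using ws pvw_rec[of a mid b] by simp
  next
    case False
    then have "ws = [] \<or> (\<exists>p. ws = [p])"
      by (metis One_nat_def Suc_1 Suc_le_eq le_0_eq length_0_conv length_Suc_conv nat_less_le not_less_eq_eq)
    then show ?thesis using less.prems by (auto simp: pvw_single pB'_def phiB'_def)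
  qed
qed

end


lemma fprod_Cons: "gs \<noteq> [] \<Longrightarrow> fprod (g # gs) = g * fprod gs"
  by (cases gs) auto

context bctx
begin

lemmas lin_simps = bm_add_left bm_add_right bm_sc_left bm_sc_right pB_add pB'_add pB_sc pB'_sc

lemma cw_types:
  assumes "cw {k \<in> K. P k} Bf ws" "p \<in> set ws" shows "P (fst p)"
  using assms by (auto simp: cw_def)

lemma cw_F_fst0:
  assumes Fz: "\<forall>k\<in>K. isF k \<longrightarrow> (\<forall>b\<in>Bf k. pB b = 0 \<longrightarrow> fst b = 0)"
    and "cw K Bf ws"
  shows "\<forall>p\<in>set ws. isF (fst p) \<longrightarrow> fst (snd p) = 0"
  using assms by (auto simp: cw_def)

lemma cw_concat3:
  assumes u0: "cw {k \<in> K. \<not> isF k} Bf u" and G0: "cw {k \<in> K. isF k} Bf G" "G \<noteq> []"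
    and v0: "cw {k \<in> K. \<not> isF k} Bf v"
  shows "cw K Bf (u @ G @ v)"
proof -
  have u: "cw K Bf u" by (rule cw_mono[OF _ u0]) auto
  have G: "cw K Bf G" by (rule cw_mono[OF _ G0(1)]) auto
  have v: "cw K Bf v" by (rule cw_mono[OF _ v0]) auto
  have a1: "u \<noteq> [] \<Longrightarrow> \<not> isF (fst (last u))" using u0 by (auto simp: cw_def)
  have a2: "isF (fst (hd G))" "isF (fst (last G))" using G0 by (auto simp: cw_def)
  have a4: "v \<noteq> [] \<Longrightarrow> \<not> isF (fst (hd v))" using v0 by (auto simp: cw_def)
  have "cw K Bf (G @ v)" using G v a2 a4 by (subst cw_append) auto
  moreover have "hd (G @ v) = hd G" using G0(2) by simp
  ultimately show ?thesis using u a1 a2 G0(2) by (subst cw_append) auto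
qed

lemma GL1_gen:
  assumes sub: "\<forall>k\<in>K. subalgB (Bf k)"
    and Fz: "\<forall>k\<in>K. isF k \<longrightarrow> (\<forall>b\<in>Bf k. pB b = 0 \<longrightarrow> fst b = 0)"
    and IF: "\<forall>ws. ws \<noteq> [] \<and> cw K Bf ws \<longrightarrow> pB (wp ws) = 0 \<and> pB' (wp ws) = pvw ws"
    and u: "cw {k \<in> K. \<not> isF k} Bf u" and G: "cw {k \<in> K. isF k} Bf G" "G \<noteq> []"
    and v: "cw {k \<in> K. \<not> isF k} Bf v"
  shows "pB' (bm (wp u) (bm (wp G) (wp v))) = pB (bm (wp u) (wp v)) * pB' (wp G)"
proof -
  have W: "cw K Bf (u @ G @ v)" by (rule cw_concat3[OF u G v])
  have e: "bm (wp u) (bm (wp G) (wp v)) = wp (u @ G @ v)" by (simp add: wp_append)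
  have val: "pB' (wp (u @ G @ v)) = pvw (u @ G @ v)" using IF W G(2) by simp
  have subA: "\<forall>k\<in>{k \<in> K. \<not> isF k}. subalgB (Bf k)" using sub by auto
  have H0A: "\<forall>w. cw {k \<in> K. \<not> isF k} Bf w \<and> w \<noteq> [] \<longrightarrow> pB (wp w) = 0"
    using IF cw_mono[of "{k \<in> K. \<not> isF k}" K] by blast
  have F0: "\<forall>p\<in>set (u @ G @ v). isF (fst p) \<longrightarrow> fst (snd p) = 0"
    using cw_F_fst0[OF Fz W] .
  show ?thesis
  proof (cases "length G = 1")
    case True
    then obtain g where g: "G = [g]" by (cases G) auto
    have kF: "isF (fst g)" using G g by (auto simp: cw_def)
    have "fst g \<notin> fst ` set u" "fst g \<notin> fst ` set v"
      using kF cw_types[OF u] cw_types[OF v] by auto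
    then have "pvw (u @ [(fst g, snd g)] @ v) = mv u (rev v) * pB' (snd g)" by (rule PAL)
    moreover have "pB (bm (wp u) (wp v)) = mv u (rev v)"
      by (rule L_lemma[OF subA H0A u v])
    ultimately show ?thesis using e val g by simp
  next
    case False
    then obtain g1 g2 G' where g: "G = g1 # g2 # G'" using G(2)
      by (metis One_nat_def length_Cons list.exhaust list.size(3))
    have f1: "isF (fst g1)" "isF (fst g2)" using G g by (auto simp: cw_def)
    have "pvw (u @ G @ v) = 0"
      by (rule PAL0[OF F0, of u g1 "[]" g2 "G' @ v"]) (simp_all add: g f1)
    moreover have "pB' (wp G) = 0"
    proof -
      have "cw K Bf G" by (rule cw_mono[OF _ G(1)]) auto
      then have "pB' (wp G) = pvw G" using IF G(2) by blast
      also have "\<dots> = 0"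
        by (rule PAL0[OF cw_F_fst0[OF Fz \<open>cw K Bf G\<close>], of "[]" g1 "[]" g2 G']) (simp_all add: g f1)
      finally show ?thesis .
    qed
    ultimately show ?thesis using e val by simp
  qed
qed

lemma GL1:
  assumes sub: "\<forall>k\<in>K. subalgB (Bf k)"
    and Fz: "\<forall>k\<in>K. isF k \<longrightarrow> (\<forall>b\<in>Bf k. pB b = 0 \<longrightarrow> fst b = 0)"
    and IF: "\<forall>ws. ws \<noteq> [] \<and> cw K Bf ws \<longrightarrow> pB (wp ws) = 0 \<and> pB' (wp ws) = pvw ws"
    and x: "x \<in> SP {k \<in> K. \<not> isF k} Bf" and y: "y \<in> spn (WS {k \<in> K. isF k} Bf)"
    and z: "z \<in> SP {k \<in> K. \<not> isF k} Bf"
  shows "pB' (bm x (bm y z)) = pB (bm x z) * pB' y"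
proof -
  let ?KA = "{k \<in> K. \<not> isF k}" and ?KF = "{k \<in> K. isF k}"
  define f where "f x y z = pB' (bm x (bm y z)) - pB (bm x z) * pB' y" for x y z
  have lx: "lin (\<lambda>x. f x y z)" for y z unfolding f_def lin_def
    by (simp add: lin_simps algebra_simps del: split_paired_All)
  have ly: "lin (\<lambda>y. f x y z)" for x z unfolding f_def lin_def
    by (simp add: lin_simps algebra_simps del: split_paired_All)
  have lz: "lin (\<lambda>z. f x y z)" for x y unfolding f_def lin_def
    by (simp add: lin_simps algebra_simps del: split_paired_All)
  have s1: "f (wp u) (wp G) (wp v) = 0" if "cw ?KA Bf u" "cw ?KF Bf G" "G \<noteq> []" "cw ?KA Bf v" for u G v
    unfolding f_def using GL1_gen[OF sub Fz IF that] by simp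
  have s2: "f (wp u) (wp G) z = 0" if "cw ?KA Bf u" "cw ?KF Bf G" "G \<noteq> []" "z \<in> SP ?KA Bf" for u G z
    using spn_zero[OF lz[of "wp u" "wp G"], of "{wp w |w. cw ?KA Bf w}" z] s1 that unfolding SP_def by blast
  have s3: "f (wp u) y z = 0" if "cw ?KA Bf u" "y \<in> spn (WS ?KF Bf)" "z \<in> SP ?KA Bf" for u y z
    using spn_zero[OF ly[of "wp u" z], of "WS ?KF Bf" y] s2 that unfolding WS_def by blast
  have s4: "f x y z = 0"
    using spn_zero[OF lx[of y z], of "{wp w |w. cw ?KA Bf w}" x] s3 x y z unfolding SP_def by blast
  then show ?thesis unfolding f_def by simp
qed

lemma GL2_gen:
  assumes Fz: "\<forall>k\<in>K. isF k \<longrightarrow> (\<forall>b\<in>Bf k. pB b = 0 \<longrightarrow> fst b = 0)"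
    and sub: "\<forall>k\<in>K. subalgB (Bf k)"
    and IF: "\<forall>ws. ws \<noteq> [] \<and> cw K Bf ws \<longrightarrow> pB (wp ws) = 0 \<and> pB' (wp ws) = pvw ws"
    and u: "cw {k \<in> K. \<not> isF k} Bf u" and G1: "cw {k \<in> K. isF k} Bf G1" "G1 \<noteq> []"
    and w: "cw {k \<in> K. \<not> isF k} Bf w" "w \<noteq> []"
    and G2: "cw {k \<in> K. isF k} Bf G2" "G2 \<noteq> []" and t: "cw K Bf t"
  shows "pB' (bm (wp u) (bm (wp G1) (bm (wp w) (bm (wp G2) (wp t))))) = 0"
proof -
  define W where "W = u @ G1 @ w @ G2"
  have W1: "cw K Bf (u @ G1 @ w)" using cw_concat3[OF u G1 w(1)] .
  have hG2: "isF (fst (hd G2))" "isF (fst (last G2))" using G2 by (auto simp: cw_def)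
  have lw: "\<not> isF (fst (last w))" using w by (auto simp: cw_def)
  have G2K: "cw K Bf G2" by (rule cw_mono[OF _ G2(1)]) auto
  have "cw K Bf ((u @ G1 @ w) @ G2)"
    by (subst cw_append) (use W1 G2K hG2 lw w(2) G2(2) in auto)
  then have W2: "cw K Bf W" unfolding W_def by simp
  have lW: "last W = last G2" using G2(2) W_def by simp
  have e: "bm (wp u) (bm (wp G1) (bm (wp w) (bm (wp G2) (wp t)))) = bm (wp W) (wp t)"
    by (simp add: W_def wp_append bm_assoc)
  obtain g1 G1' where g1: "G1 = g1 # G1'" using G1(2) by (cases G1) auto
  obtain G2' g2 where g2: "G2 = G2' @ [g2]" using G2(2) by (cases G2 rule: rev_exhaust) auto
  have fg: "isF (fst g1)" "isF (fst g2)" using G1 G2 g1 g2 by (auto simp: cw_def)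
  show ?thesis
  proof (cases "t \<noteq> [] \<and> fst (last G2) = fst (hd t)")
    case False
    have c: "cw K Bf (W @ t)"
      by (subst cw_append) (use W2 t False lW in auto)
    have "pB' (wp (W @ t)) = pvw (W @ t)" using IF c W_def G1(2) by simp
    also have "\<dots> = 0"
      by (rule PAL0[OF cw_F_fst0[OF Fz c], of u g1 "G1' @ w @ G2'" g2 t])
         (simp_all add: W_def g1 g2 fg)
    finally show ?thesis using e by (simp add: wp_append)
  next
    case True
    then obtain b t' where tb: "t = b # t'" by (cases t) auto
    have eq: "fst g2 = fst b" using True tb g2 by simp
    have cW: "cw K Bf ((u @ G1 @ w @ G2') @ [g2])" using W2 g2 W_def by simp
    have ct: "cw K Bf (b # t')" using t tb by simp
    note m = merge[OF sub cW ct eq]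
    have g2in: "fst g2 \<in> K" "snd g2 \<in> Bf (fst g2)" "pB (snd g2) = 0" using cW by (auto simp: cw_def)
    have "fst (snd g2) = 0" using Fz g2in fg by blast
    then have beta: "pB (bm (snd g2) (snd b)) = 0" by (simp add: pB_def phiB_def)
    define z where "z = bm (snd g2) (snd b) - bsc (pB (bm (snd g2) (snd b))) one"
    have c2: "cw K Bf ((u @ G1 @ w @ G2') @ [(fst g2, z)] @ t')"
      using m[THEN conjunct1] unfolding z_def .
    have "W = (u @ G1 @ w @ G2') @ [g2]" using W_def g2 by simp
    then have "bm (wp W) (wp t) = bsc 0 (bm (wp (u @ G1 @ w @ G2')) (wp t')) + wp ((u @ G1 @ w @ G2') @ [(fst g2, z)] @ t')"
      using m[THEN conjunct2] beta tb unfolding z_def by simp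
    then have "bm (wp W) (wp t) = wp ((u @ G1 @ w @ G2') @ [(fst g2, z)] @ t')" by simp
    moreover have "pB' (wp ((u @ G1 @ w @ G2') @ [(fst g2, z)] @ t')) = 0"
    proof -
      have "pB' (wp ((u @ G1 @ w @ G2') @ [(fst g2, z)] @ t')) = pvw ((u @ G1 @ w @ G2') @ [(fst g2, z)] @ t')"
        using IF c2 by simp
      also have "\<dots> = 0"
        by (rule PAL0[OF cw_F_fst0[OF Fz c2], of u g1 "G1' @ w @ G2'" "(fst g2, z)" t'])
           (simp_all add: g1 fg)
      finally show ?thesis .
    qed
    ultimately show ?thesis using e by simp
  qed
qed

end


context bctx
begin

lemma GL2:
  assumes sub: "\<forall>k\<in>K. subalgB (Bf k)"
    and Fz: "\<forall>k\<in>K. isF k \<longrightarrow> (\<forall>b\<in>Bf k. pB b = 0 \<longrightarrow> fst b = 0)"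
    and IF: "\<forall>ws. ws \<noteq> [] \<and> cw K Bf ws \<longrightarrow> pB (wp ws) = 0 \<and> pB' (wp ws) = pvw ws"
    and x: "x \<in> SP {k \<in> K. \<not> isF k} Bf" and y1: "y1 \<in> spn (WS {k \<in> K. isF k} Bf)"
    and z: "z \<in> spn (WS {k \<in> K. \<not> isF k} Bf)" and y2: "y2 \<in> spn (WS {k \<in> K. isF k} Bf)"
    and t: "t \<in> SP K Bf"
  shows "pB' (bm x (bm y1 (bm z (bm y2 t)))) = 0"
proof -
  let ?KA = "{k \<in> K. \<not> isF k}" and ?KF = "{k \<in> K. isF k}"
  define f where "f x y1 z y2 t = pB' (bm x (bm y1 (bm z (bm y2 t))))" for x y1 z y2 t
  have l1: "lin (\<lambda>x. f x y1 z y2 t)" for y1 z y2 t unfolding f_def lin_def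
    by (simp add: lin_simps del: split_paired_All)
  have l2: "lin (\<lambda>y1. f x y1 z y2 t)" for x z y2 t unfolding f_def lin_def
    by (simp add: lin_simps del: split_paired_All)
  have l3: "lin (\<lambda>z. f x y1 z y2 t)" for x y1 y2 t unfolding f_def lin_def
    by (simp add: lin_simps del: split_paired_All)
  have l4: "lin (\<lambda>y2. f x y1 z y2 t)" for x y1 z t unfolding f_def lin_def
    by (simp add: lin_simps del: split_paired_All)
  have l5: "lin (\<lambda>t. f x y1 z y2 t)" for x y1 z y2 unfolding f_def lin_def
    by (simp add: lin_simps del: split_paired_All)
  have s1: "f (wp u) (wp G1) (wp w) (wp G2) (wp tw) = 0"
    if "cw ?KA Bf u" "cw ?KF Bf G1" "G1 \<noteq> []" "cw ?KA Bf w" "w \<noteq> []"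
       "cw ?KF Bf G2" "G2 \<noteq> []" "cw K Bf tw" for u G1 w G2 tw
    unfolding f_def by (rule GL2_gen[OF Fz sub IF that])
  have s2: "f (wp u) (wp G1) (wp w) (wp G2) t = 0"
    if "cw ?KA Bf u" "cw ?KF Bf G1" "G1 \<noteq> []" "cw ?KA Bf w" "w \<noteq> []"
       "cw ?KF Bf G2" "G2 \<noteq> []" "t \<in> SP K Bf" for u G1 w G2 t
    using spn_zero[OF l5[of "wp u" "wp G1" "wp w" "wp G2"], of "{wp w |w. cw K Bf w}" t] s1 that
    unfolding SP_def by blast
  have s3: "f (wp u) (wp G1) (wp w) y2 t = 0"
    if "cw ?KA Bf u" "cw ?KF Bf G1" "G1 \<noteq> []" "cw ?KA Bf w" "w \<noteq> []"
       "y2 \<in> spn (WS ?KF Bf)" "t \<in> SP K Bf" for u G1 w y2 t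
    using spn_zero[OF l4[of "wp u" "wp G1" "wp w" t], of "WS ?KF Bf" y2] s2 that
    unfolding WS_def by blast
  have s4: "f (wp u) (wp G1) z y2 t = 0"
    if "cw ?KA Bf u" "cw ?KF Bf G1" "G1 \<noteq> []" "z \<in> spn (WS ?KA Bf)"
       "y2 \<in> spn (WS ?KF Bf)" "t \<in> SP K Bf" for u G1 z y2 t
    using spn_zero[OF l3[of "wp u" "wp G1" y2 t], of "WS ?KA Bf" z] s3 that
    unfolding WS_def by blast
  have s5: "f (wp u) y1 z y2 t = 0"
    if "cw ?KA Bf u" "y1 \<in> spn (WS ?KF Bf)" "z \<in> spn (WS ?KA Bf)"
       "y2 \<in> spn (WS ?KF Bf)" "t \<in> SP K Bf" for u y1 z y2 t
    using spn_zero[OF l2[of "wp u" z y2 t], of "WS ?KF Bf" y1] s4 that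
    unfolding WS_def by blast
  have "f x y1 z y2 t = 0"
    using spn_zero[OF l1[of y1 z y2 t], of "{wp w |w. cw ?KA Bf w}" x] s5 x y1 z y2 t
    unfolding SP_def by blast
  then show ?thesis unfolding f_def .
qed

lemma interleave_genB:
  assumes A: "\<forall>c\<in>AA. (c, 0) \<in> genB K Bf" and G: "\<forall>g\<in>GG. (0, g) \<in> genB K Bf"
  shows "set cs \<subseteq> AA \<Longrightarrow> set gs \<subseteq> GG \<Longrightarrow> bprod la ra (interleave cs gs) \<in> genB K Bf"
proof (induction cs gs rule: interleave.induct)
  case (1 c cs g gs)
  then have "(c, 0) \<in> genB K Bf" "(0, g) \<in> genB K Bf" using A G by auto
  then show ?case using 1 by (auto intro: genB_mult)
next
  case (2 c)
  then show ?case using A by auto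
qed (auto intro: genB_one)

lemma cyc_from_inf:
  assumes sub: "\<forall>k\<in>K. subalgB (Bf k)"
    and Fz: "\<forall>k\<in>K. isF k \<longrightarrow> (\<forall>b\<in>Bf k. pB b = 0 \<longrightarrow> fst b = 0)"
    and IF: "\<forall>ws. ws \<noteq> [] \<and> cw K Bf ws \<longrightarrow> pB (wp ws) = 0 \<and> pB' (wp ws) = pvw ws"
    and A: "\<forall>c\<in>AA. (c, 0) \<in> genB {k \<in> K. \<not> isF k} Bf"
    and G: "\<forall>g\<in>GG. (0, g) \<in> genB {k \<in> K. isF k} Bf"
    and Gm: "\<forall>g\<in>GG. \<forall>h\<in>GG. g * h \<in> GG"
  shows "cyc_antimonotone phi la ra Phi AA GG"
proof -
  let ?KA = "{k \<in> K. \<not> isF k}" and ?KF = "{k \<in> K. isF k}"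
  have subA: "\<forall>k\<in>?KA. subalgB (Bf k)" and subF: "\<forall>k\<in>?KF. subalgB (Bf k)" using sub by auto
  have H0A: "\<forall>w. cw ?KA Bf w \<and> w \<noteq> [] \<longrightarrow> pB (wp w) = 0"
    using IF cw_mono[of ?KA K] by blast
  have H0F: "\<forall>w. cw ?KF Bf w \<and> w \<noteq> [] \<longrightarrow> pB (wp w) = 0"
    using IF cw_mono[of ?KF K] by blast
  have cA: "(c, 0) \<in> SP ?KA Bf" if "c \<in> AA" for c using A that genB_SP[OF subA] by blast
  have cA0: "(c, 0) - bsc (phi c) one \<in> spn (WS ?KA Bf)" if "c \<in> AA" for c
  proof -
    have "(c, 0) - bsc (phi c) one \<in> genB ?KA Bf"
      using A that by (intro genB_diff genB_sc genB_one) auto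
    then have "(c, 0) - bsc (phi c) one \<in> SP ?KA Bf" using genB_SP[OF subA] by blast
    moreover have "pB ((c, 0) - bsc (phi c) one) = 0"
      by (simp add: pB_diff pB_sc) (simp add: pB_def phiB_def)
    ultimately show ?thesis using SP_centered[OF H0A] by blast
  qed
  have gF: "(0, g) \<in> spn (WS ?KF Bf)" if "g \<in> GG" for g
  proof -
    have "(0, g) \<in> SP ?KF Bf" using G that genB_SP[OF subF] by blast
    moreover have "pB (0, g) = 0" by (simp add: pB_def phiB_def)
    ultimately show ?thesis using SP_centered[OF H0F] by blast
  qed
  have AK: "\<forall>c\<in>AA. (c, 0) \<in> genB K Bf" using A genB_mono[of _ ?KA Bf K] by blast
  have GK: "\<forall>g\<in>GG. (0, g) \<in> genB K Bf" using G genB_mono[of _ ?KF Bf K] by blast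
  have tK: "bprod la ra (interleave cs gs) \<in> SP K Bf" if "set cs \<subseteq> AA" "set gs \<subseteq> GG" for cs gs
    using interleave_genB[OF AK GK that] genB_SP[OF sub] by blast
  have main: "\<forall>cs gs. length gs = Suc m \<longrightarrow> length cs = Suc (Suc m) \<longrightarrow> set cs \<subseteq> AA \<longrightarrow> set gs \<subseteq> GG \<longrightarrow>
     Phi (snd (bprod la ra (interleave cs gs))) =
       phi (cs ! 0 * cs ! Suc m) * (\<Prod>l\<in>{1..m}. phi (cs ! l)) * Phi (fprod gs)" for m
  proof (induction m)
    case 0
    show ?case
    proof (intro allI impI)
      fix cs gs assume a: "length gs = Suc 0" "length cs = Suc (Suc 0)" "set cs \<subseteq> AA" "set gs \<subseteq> GG"
      then obtain c0 c1 g where cs: "cs = [c0, c1]" and gs: "gs = [g]"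
        by (metis (no_types, opaque_lifting) One_nat_def length_0_conv length_Suc_conv)
      have in3: "c0 \<in> AA" "c1 \<in> AA" "g \<in> GG" using a cs gs by auto
      have "pB' (bm (c0, 0) (bm (0, g) (c1, 0))) = pB (bm (c0, 0) (c1, 0)) * pB' (0, g)"
        by (rule GL1[OF sub Fz IF cA[OF in3(1)] gF[OF in3(3)] cA[OF in3(2)]])
      then show "Phi (snd (bprod la ra (interleave cs gs))) =
         phi (cs ! 0 * cs ! Suc 0) * (\<Prod>l\<in>{1..0}. phi (cs ! l)) * Phi (fprod gs)"
        unfolding cs gs by (simp add: pB_def pB'_def phiB_def phiB'_def)
    qed
  next
    case (Suc m)
    show ?case
    proof (intro allI impI)
      fix cs gs assume a: "length gs = Suc (Suc m)" "length cs = Suc (Suc (Suc m))" "set cs \<subseteq> AA" "set gs \<subseteq> GG"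
      then obtain c0 c1 c2 cs'' where cs: "cs = c0 # c1 # c2 # cs''"
        by (metis length_Suc_conv)
      from a obtain g1 g2 gs' where gs: "gs = g1 # g2 # gs'"
        by (metis length_Suc_conv)
      have lens: "length cs'' = m" "length gs' = m" using a cs gs by auto
      have ins: "c0 \<in> AA" "c1 \<in> AA" "c2 \<in> AA" "set cs'' \<subseteq> AA" "g1 \<in> GG" "g2 \<in> GG" "set gs' \<subseteq> GG"
        using a cs gs by auto
      define T where "T = bprod la ra (interleave (c2 # cs'') gs')"
      have TK: "T \<in> SP K Bf" unfolding T_def using tK ins by auto
      define C0 where "C0 = (c1, 0) - bsc (phi c1) one"
      have C0s: "C0 \<in> spn (WS ?KA Bf)" unfolding C0_def using cA0 ins by auto
      have c1dec: "(c1, 0) = bsc (phi c1) one + C0" unfolding C0_def by simp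
      have "bprod la ra (interleave cs gs) = bm (c0, 0) (bm (0, g1) (bm (c1, 0) (bm (0, g2) T)))"
        by (simp add: cs gs T_def)
      also have "\<dots> = bsc (phi c1) (bm (c0, 0) (bm (0, g1) (bm (0, g2) T))) +
                      bm (c0, 0) (bm (0, g1) (bm C0 (bm (0, g2) T)))"
        unfolding c1dec by (simp add: lin_simps)
      finally have e1: "pB' (bprod la ra (interleave cs gs)) =
          phi c1 * pB' (bm (c0, 0) (bm (0, g1) (bm (0, g2) T))) + pB' (bm (c0, 0) (bm (0, g1) (bm C0 (bm (0, g2) T))))"
        by (simp add: pB'_add pB'_sc)
      have z2: "pB' (bm (c0, 0) (bm (0, g1) (bm C0 (bm (0, g2) T)))) = 0"
        by (rule GL2[OF sub Fz IF cA[OF ins(1)] gF[OF ins(5)] C0s gF[OF ins(6)] TK])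
      have g12: "bm (0, g1) (bm (0, g2) T) = bm (0, g1 * g2) T"
        by (simp add: bm_assoc[symmetric] bm_Pair)
      have "bm (c0, 0) (bm (0, g1 * g2) T) = bprod la ra (interleave (c0 # c2 # cs'') ((g1 * g2) # gs'))"
        by (simp add: T_def)
      moreover have "length ((g1 * g2) # gs') = Suc m" "length (c0 # c2 # cs'') = Suc (Suc m)"
        "set (c0 # c2 # cs'') \<subseteq> AA" "set ((g1 * g2) # gs') \<subseteq> GG"
        using lens ins Gm by auto
      ultimately have ih: "pB' (bm (c0, 0) (bm (0, g1 * g2) T)) =
          phi (c0 * (c0 # c2 # cs'') ! Suc m) * (\<Prod>l\<in>{1..m}. phi ((c0 # c2 # cs'') ! l)) *
          Phi (fprod ((g1 * g2) # gs'))"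
        using Suc.IH unfolding pB'_def phiB'_def by (metis nth_Cons_0)
      have last: "(c0 # c2 # cs'') ! Suc m = cs ! Suc (Suc m)" by (simp add: cs)
      have fp: "fprod ((g1 * g2) # gs') = fprod gs"
        by (cases gs') (simp_all add: gs mult.assoc)
      have pr: "(\<Prod>l\<in>{1..Suc m}. phi (cs ! l)) = phi c1 * (\<Prod>l\<in>{1..m}. phi ((c0 # c2 # cs'') ! l))"
      proof -
        have "(\<Prod>l\<in>{1..Suc m}. phi (cs ! l)) = phi (cs ! 1) * (\<Prod>l\<in>{Suc 1..Suc m}. phi (cs ! l))"
          by (rule prod.atLeast_Suc_atMost) simp
        also have "(\<Prod>l\<in>{Suc 1..Suc m}. phi (cs ! l)) = (\<Prod>l\<in>{1..m}. phi (cs ! Suc l))"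
          by (rule prod.shift_bounds_cl_Suc_ivl)
        also have "\<dots> = (\<Prod>l\<in>{1..m}. phi ((c0 # c2 # cs'') ! l))"
          by (rule prod.cong) (auto simp: cs nth_Cons split: nat.splits)
        finally show ?thesis by (simp add: cs)
      qed
      show "Phi (snd (bprod la ra (interleave cs gs))) =
         phi (cs ! 0 * cs ! Suc (Suc m)) * (\<Prod>l\<in>{1..Suc m}. phi (cs ! l)) * Phi (fprod gs)"
        using e1 z2 g12 ih last fp pr unfolding pB'_def phiB'_def
        by (simp add: cs)
    qed
  qed
  show ?thesis unfolding cyc_antimonotone_def
  proof (intro allI impI)
    fix n cs gs
    assume a: "1 \<le> n \<and> length cs = n + 1 \<and> length gs = n \<and> set cs \<subseteq> AA \<and> set gs \<subseteq> GG"
    then obtain m where n: "n = Suc m" by (cases n) auto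
    show "Phi (snd (bprod la ra (interleave cs gs))) =
       phi (cs ! 0 * cs ! n) * (\<Prod>l\<in>{1..n - 1}. phi (cs ! l)) * Phi (fprod gs)"
      using main[of m] a n by simp
  qed
qed

end


context bctx
begin

lemma fst_wp: "fst (wp ws) = prod_list (map (\<lambda>p. fst (snd p)) ws)"
  by (induction ws) (simp_all add: wp_Cons one_def)

lemma wpA:
  assumes "\<forall>p\<in>set u. snd (snd p) = 0 \<and> fst (snd p) \<in> AA" and A1: "1 \<in> AA"
    and Am: "\<forall>x\<in>AA. \<forall>y\<in>AA. x * y \<in> AA"
  shows "wp u = (prod_list (map (\<lambda>p. fst (snd p)) u), 0) \<and> prod_list (map (\<lambda>p. fst (snd p)) u) \<in> AA"
  using assms(1)
proof (induction u)
  case Nil then show ?case using A1 by (simp add: one_def)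
next
  case (Cons p u)
  then have "snd p = (fst (snd p), 0)" "fst (snd p) \<in> AA" by (simp_all add: prod_eq_iff)
  then show ?case using Cons Am by (simp add: wp_Cons prod_eq_iff)
qed

lemma wpF:
  assumes "\<forall>p\<in>set R. fst (snd p) = 0 \<and> snd (snd p) \<in> GG" and "R \<noteq> []"
    and Gm: "\<forall>x\<in>GG. \<forall>y\<in>GG. x * y \<in> GG"
  shows "wp R = (0, fprod (map (\<lambda>p. snd (snd p)) R)) \<and> fprod (map (\<lambda>p. snd (snd p)) R) \<in> GG"
  using assms(1,2)
proof (induction R)
  case Nil then show ?case by simp
next
  case (Cons p R)
  have sp: "snd p = (0, snd (snd p))" "snd (snd p) \<in> GG" using Cons.prems by (simp_all add: prod_eq_iff)
  show ?case
  proof (cases "R = []")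
    case True then show ?thesis using sp by simp
  next
    case False
    then have ih: "wp R = (0, fprod (map (\<lambda>p. snd (snd p)) R))" "fprod (map (\<lambda>p. snd (snd p)) R) \<in> GG"
      using Cons by auto
    have "wp (p # R) = bm (0, snd (snd p)) (0, fprod (map (\<lambda>p. snd (snd p)) R))"
      using ih sp by (simp add: wp_Cons)
    then show ?thesis using False ih sp Gm Cons.prems by (simp add: prod_eq_iff fprod_Cons)
  qed
qed

lemma GRP:
  assumes tp: "\<forall>p\<in>set ys. (\<not> isF (fst p) \<longrightarrow> snd (snd p) = 0 \<and> fst (snd p) \<in> AA) \<and>
                               (isF (fst p) \<longrightarrow> fst (snd p) = 0 \<and> snd (snd p) \<in> GG)"
    and A1: "1 \<in> AA" and Am: "\<forall>x\<in>AA. \<forall>y\<in>AA. x * y \<in> AA"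
  shows "\<exists>c cs gs. length cs = length gs \<and> set (c # cs) \<subseteq> AA \<and> set gs \<subseteq> GG \<and>
           wp ys = bprod la ra (interleave (c # cs) gs)"
  using tp
proof (induction ys)
  case Nil
  show ?case using A1 by (intro exI[of _ 1] exI[of _ "[]"]) (simp add: one_def prod_eq_iff)
next
  case (Cons p ys)
  then obtain c cs gs where ih: "length cs = length gs" "set (c # cs) \<subseteq> AA" "set gs \<subseteq> GG"
    "wp ys = bprod la ra (interleave (c # cs) gs)" by auto
  show ?case
  proof (cases "isF (fst p)")
    case True
    then have sp: "snd p = (0, snd (snd p))" "snd (snd p) \<in> GG" using Cons.prems
      by (simp_all add: prod_eq_iff)
    have "wp (p # ys) = bprod la ra (interleave (1 # c # cs) (snd (snd p) # gs))"
      using ih(4) sp by (simp add: wp_Cons one_def[symmetric])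
    then show ?thesis using ih A1 sp by (intro exI[of _ 1] exI[of _ "c # cs"] exI[of _ "snd (snd p) # gs"]) auto
  next
    case False
    then have sp: "snd p = (fst (snd p), 0)" "fst (snd p) \<in> AA" using Cons.prems
      by (simp_all add: prod_eq_iff)
    have "wp (p # ys) = bprod la ra (interleave ((fst (snd p) * c) # cs) gs)"
    proof (cases gs)
      case Nil
      then have "cs = []" using ih by simp
      then show ?thesis using ih(4) sp Nil Cons.prems False by (simp add: wp_Cons prod_eq_iff one_def)
    next
      case (Cons g gs')
      then obtain c' cs' where "cs = c' # cs'" using ih by (cases cs) auto
      define Y where "Y = bm (0, g) (bprod la ra (interleave cs gs'))"
      have e1: "bprod la ra (interleave (c # cs) gs) = bm (c, 0) Y"
        using \<open>cs = c' # cs'\<close> Cons by (simp add: Y_def)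
      have e2: "bprod la ra (interleave ((fst (snd p) * c) # cs) gs) = bm (fst (snd p) * c, 0) Y"
        using \<open>cs = c' # cs'\<close> Cons by (simp add: Y_def)
      have "wp (p # ys) = bm (fst (snd p), 0) (bm (c, 0) Y)"
        using ih(4) e1 sp(1) by (simp add: wp_Cons)
      also have "\<dots> = bm (bm (fst (snd p), 0) (c, 0)) Y" by (simp add: bm_assoc)
      also have "bm (fst (snd p), 0) (c, 0) = (fst (snd p) * c, 0)" by (simp add: bm_Pair)
      finally show ?thesis using e2 by simp
    qed
    then show ?thesis using ih Am sp by (intro exI[of _ "fst (snd p) * c"] exI[of _ cs] exI[of _ gs]) auto
  qed
qed

lemma inf_from_cyc:
  assumes sub: "\<forall>k\<in>K. subalgB (Bf k)"
    and TA: "\<forall>k\<in>K. \<not> isF k \<longrightarrow> (\<forall>b\<in>Bf k. snd b = 0 \<and> fst b \<in> AA)"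
    and TF: "\<forall>k\<in>K. isF k \<longrightarrow> (\<forall>b\<in>Bf k. pB b = 0 \<longrightarrow> fst b = 0 \<and> snd b \<in> GG)"
    and A1: "1 \<in> AA" and Am: "\<forall>x\<in>AA. \<forall>y\<in>AA. x * y \<in> AA"
    and Gm: "\<forall>x\<in>GG. \<forall>y\<in>GG. x * y \<in> GG"
    and CYC: "cyc_antimonotone phi la ra Phi AA GG"
    and H0A: "\<forall>w. cw {k \<in> K. \<not> isF k} Bf w \<and> w \<noteq> [] \<longrightarrow> pB (wp w) = 0"
    and HT: "\<forall>G. cw {k \<in> K. isF k} Bf G \<and> 2 \<le> length G \<longrightarrow> pB' (wp G) = 0"
  shows "\<forall>ws. ws \<noteq> [] \<and> cw K Bf ws \<longrightarrow> pB (wp ws) = 0 \<and> pB' (wp ws) = pvw ws"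
proof (intro allI impI)
  let ?KA = "{k \<in> K. \<not> isF k}" and ?KF = "{k \<in> K. isF k}"
  have subA: "\<forall>k\<in>?KA. subalgB (Bf k)" using sub by auto
  fix ws assume ws: "ws \<noteq> [] \<and> cw K Bf ws"
  have tp: "\<forall>p\<in>set ws. (\<not> isF (fst p) \<longrightarrow> snd (snd p) = 0 \<and> fst (snd p) \<in> AA) \<and>
                               (isF (fst p) \<longrightarrow> fst (snd p) = 0 \<and> snd (snd p) \<in> GG)"
    using ws TA TF unfolding cw_def by blast
  have F0: "\<forall>p\<in>set ws. isF (fst p) \<longrightarrow> fst (snd p) = 0" using tp by blast
  have part1: "pB (wp ws) = 0"
  proof (cases "\<exists>p\<in>set ws. isF (fst p)")
    case True
    then obtain p where "p \<in> set ws" "fst (snd p) = 0" using F0 by blast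
    then have "fst (wp ws) = 0" unfolding fst_wp by (intro prod_list_zero) force
    then show ?thesis by (simp add: pB_def phiB_def)
  next
    case False
    then have "cw ?KA Bf ws" using ws by (intro cw_restrict) auto
    then show ?thesis using H0A ws by blast
  qed
  define P where "P = (\<lambda>p::'b \<times> ('a \<times> 'f). \<not> isF (fst p))"
  define u where "u = takeWhile P ws"
  define r0 where "r0 = dropWhile P ws"
  have part2: "pB' (wp ws) = pvw ws"
  proof (cases "r0 = []")
    case True
    then have allP: "\<forall>p\<in>set ws. P p" unfolding r0_def by (simp add: dropWhile_eq_Nil_conv)
    then have "\<forall>p\<in>set ws. snd (snd p) = 0 \<and> fst (snd p) \<in> AA" using tp unfolding P_def by blast
    then have "snd (wp ws) = 0" using wpA[OF _ A1 Am, of ws] by simp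
    moreover have "pvw ws = 0"
      using PV0 \<open>\<forall>p\<in>set ws. snd (snd p) = 0 \<and> fst (snd p) \<in> AA\<close> by blast
    ultimately show ?thesis by (simp add: pB'_def phiB'_def)
  next
    case False
    define R where "R = takeWhile (Not \<circ> P) r0"
    define r1 where "r1 = dropWhile (Not \<circ> P) r0"
    define v where "v = takeWhile P r1"
    define r2 where "r2 = dropWhile P r1"
    have wsd: "ws = u @ R @ v @ r2" unfolding u_def R_def v_def r2_def r1_def r0_def by simp
    have hr0: "\<not> P (hd r0)" using False unfolding r0_def by (rule hd_dropWhile)
    have Rne: "R \<noteq> []" using False hr0 unfolding R_def by (cases r0) auto
    have cwK: "cw K Bf u" "cw K Bf R" "cw K Bf v" "cw K Bf r2"
      using ws unfolding wsd by (auto simp: cw_append)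
    have uP: "\<forall>p\<in>set u. P p" unfolding u_def by (auto dest: set_takeWhileD)
    have RP: "\<forall>p\<in>set R. \<not> P p" unfolding R_def by (auto dest: set_takeWhileD)
    have vP: "\<forall>p\<in>set v. P p" unfolding v_def by (auto dest: set_takeWhileD)
    have cu: "cw ?KA Bf u" using cwK(1) uP unfolding P_def by (intro cw_restrict) auto
    have cR: "cw ?KF Bf R" using cwK(2) RP unfolding P_def by (intro cw_restrict) auto
    have cv: "cw ?KA Bf v" using cwK(3) vP unfolding P_def by (intro cw_restrict) auto
    have sub_ws: "set u \<subseteq> set ws" "set R \<subseteq> set ws" "set v \<subseteq> set ws" "set r2 \<subseteq> set ws"
      unfolding wsd by auto
    have tpu: "\<forall>p\<in>set u. snd (snd p) = 0 \<and> fst (snd p) \<in> AA"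
      using tp uP sub_ws(1) unfolding P_def by blast
    have tpv: "\<forall>p\<in>set v. snd (snd p) = 0 \<and> fst (snd p) \<in> AA"
      using tp vP sub_ws(3) unfolding P_def by blast
    have tpR: "\<forall>p\<in>set R. fst (snd p) = 0 \<and> snd (snd p) \<in> GG"
      using tp RP sub_ws(2) unfolding P_def by blast
    define cU where "cU = prod_list (map (\<lambda>p. fst (snd p)) u)"
    define cV where "cV = prod_list (map (\<lambda>p. fst (snd p)) v)"
    define gR where "gR = fprod (map (\<lambda>p. snd (snd p)) R)"
    have wu: "wp u = (cU, 0)" "cU \<in> AA" using wpA[OF tpu A1 Am] unfolding cU_def by auto
    have wv: "wp v = (cV, 0)" "cV \<in> AA" using wpA[OF tpv A1 Am] unfolding cV_def by auto
    have wR: "wp R = (0, gR)" "gR \<in> GG" using wpF[OF tpR Rne Gm] unfolding gR_def by auto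
    have Luv: "phi (cU * cV) = mv u (rev v)"
      using L_lemma[OF subA H0A cu cv] wu wv by (simp add: pB_def phiB_def bm_Pair)
    show ?thesis
    proof (cases "r2 = []")
      case True
      have "wp ws = bprod la ra (interleave [cU, cV] [gR])"
        using True wu wv wR unfolding wsd by (simp add: wp_append)
      moreover have "Phi (snd (bprod la ra (interleave [cU, cV] [gR]))) =
          phi ([cU, cV] ! 0 * [cU, cV] ! 1) * (\<Prod>l\<in>{1..1 - 1}. phi ([cU, cV] ! l)) * Phi (fprod [gR])"
        by (rule CYC[unfolded cyc_antimonotone_def, rule_format]) (use wu wv wR in auto)
      ultimately have val: "pB' (wp ws) = phi (cU * cV) * Phi gR"
        by (simp add: pB'_def phiB'_def)
      show ?thesis
      proof (cases "length R = 1")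
        case True
        then obtain g where g: "R = [g]" by (cases R) auto
        have gF: "isF (fst g)" using RP g unfolding P_def by simp
        have uA: "\<forall>p\<in>set u. \<not> isF (fst p)" and vA: "\<forall>p\<in>set v. \<not> isF (fst p)"
          using uP vP unfolding P_def by simp_all
        have "fst g \<notin> fst ` set u" "fst g \<notin> fst ` set v" using gF uA vA by auto
        then have "pvw (u @ [(fst g, snd g)] @ v) = mv u (rev v) * pB' (snd g)" by (rule PAL)
        moreover have "Phi gR = pB' (snd g)" using wR g by (simp add: pB'_def phiB'_def)
        moreover have "ws = u @ [(fst g, snd g)] @ v" using wsd \<open>r2 = []\<close> g by simp
        ultimately show ?thesis using val Luv by simp
      next
        case False
        then obtain g1 g2 R' where g: "R = g1 # g2 # R'" using Rne
          by (metis One_nat_def length_Cons list.exhaust list.size(3))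
        have "pB' (wp R) = 0" using HT cR g by auto
        then have "Phi gR = 0" using wR by (simp add: pB'_def phiB'_def)
        moreover have "pvw ws = 0"
          by (rule PAL0[OF F0, of u g1 "[]" g2 "R' @ v"])
             (use wsd \<open>r2 = []\<close> g RP in \<open>auto simp: P_def\<close>)
        ultimately show ?thesis using val by simp
      qed
    next
      case False
      have r1ne: "r1 \<noteq> []" using False unfolding r2_def by auto
      have "\<not> (Not \<circ> P) (hd (dropWhile (Not \<circ> P) r0))" using r1ne unfolding r1_def by (rule hd_dropWhile)
      then have hr1: "P (hd r1)" unfolding r1_def by simp
      have vne: "v \<noteq> []" using r1ne hr1 unfolding v_def by (cases r1) auto
      have hr2: "\<not> P (hd r2)" using False unfolding r2_def by (rule hd_dropWhile)
      obtain y2 r3 where r2: "r2 = y2 # r3" using False by (cases r2) auto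
      have y2in: "y2 \<in> set ws" using wsd r2 by simp
      have y2F: "isF (fst y2)" using hr2 r2 unfolding P_def by simp
      have "fst (snd y2) = 0 \<and> snd (snd y2) \<in> GG" using tp y2in y2F by blast
      then have "snd y2 = (0, snd (snd y2)) \<and> snd (snd y2) \<in> GG" by (simp add: prod_eq_iff)
      then obtain g2 where sy2: "snd y2 = (0, g2)" "g2 \<in> GG" by blast
      have tp3: "\<forall>p\<in>set r3. (\<not> isF (fst p) \<longrightarrow> snd (snd p) = 0 \<and> fst (snd p) \<in> AA) \<and>
                               (isF (fst p) \<longrightarrow> fst (snd p) = 0 \<and> snd (snd p) \<in> GG)"
        using tp sub_ws(4) r2 by auto
      obtain d cs gs where grp: "length cs = length gs" "set (d # cs) \<subseteq> AA" "set gs \<subseteq> GG"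
        "wp r3 = bprod la ra (interleave (d # cs) gs)" using GRP[OF tp3 A1 Am] by blast
      define CS where "CS = cU # cV # d # cs"
      define GS where "GS = gR # g2 # gs"
      have "wp ws = bm (wp u) (bm (wp R) (bm (wp v) (bm (snd y2) (wp r3))))"
        unfolding wsd r2 by (simp only: wp_append wp_Cons)
      also have "\<dots> = bprod la ra (interleave CS GS)"
        unfolding CS_def GS_def using wu wv wR sy2 grp(4) by simp
      finally have ew: "wp ws = bprod la ra (interleave CS GS)" .
      define n where "n = length gs + 2"
      have "Phi (snd (bprod la ra (interleave CS GS))) =
          phi (CS ! 0 * CS ! n) * (\<Prod>l\<in>{1..n - 1}. phi (CS ! l)) * Phi (fprod GS)"
      proof (rule CYC[unfolded cyc_antimonotone_def, rule_format], intro conjI)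
        show "1 \<le> n" "length CS = n + 1" "length GS = n" unfolding n_def CS_def GS_def
          using grp(1) by simp_all
        show "set CS \<subseteq> AA" unfolding CS_def using grp(2) wu(2) wv(2) by simp
        show "set GS \<subseteq> GG" unfolding GS_def using grp(3) wR(2) sy2(2) by simp
      qed
      moreover have "(\<Prod>l\<in>{1..n - 1}. phi (CS ! l)) = 0"
      proof (rule prod_zero)
        have "pB (wp v) = 0" using H0A cv vne by blast
        then have "phi cV = 0" using wv by (simp add: pB_def phiB_def)
        then show "\<exists>l\<in>{1..n - 1}. phi (CS ! l) = 0" unfolding n_def CS_def
          by (intro bexI[of _ 1]) auto
      qed simp
      ultimately have "pB' (wp ws) = 0" using ew by (simp add: pB'_def phiB'_def)
      moreover have "pvw ws = 0"
      proof -
        obtain g1 R' where g1: "R = g1 # R'" using Rne by (cases R) auto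
        show ?thesis
          by (rule PAL0[OF F0, of u g1 "R' @ v" y2 r3])
             (use wsd r2 g1 RP y2F in \<open>auto simp: P_def\<close>)
      qed
      ultimately show ?thesis by simp
    qed
  qed
  show "pB (wp ws) = 0 \<and> pB' (wp ws) = pvw ws" using part1 part2 by simp
qed

end


context bctx
begin

lemma sa_1_mult: "sa c 1 * sa d 1 = sa (c * d) 1"
  by (metis mult_1 sa_multl sa_sa)

lemma subalgB_embA: "unital_subalg sa S \<Longrightarrow> subalgB (embA S)"
  unfolding subalgB_def unital_subalg_def embA_def
  by (auto simp: one_def bm_Pair bsc_def)

lemma subalgB_embF:
  assumes "subalg sf G" shows "subalgB (embF sa G)"
proof -
  have G: "0 \<in> G" "\<And>x y. x \<in> G \<Longrightarrow> y \<in> G \<Longrightarrow> x + y \<in> G" "\<And>x y. x \<in> G \<Longrightarrow> y \<in> G \<Longrightarrow> x * y \<in> G"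
    "\<And>c x. x \<in> G \<Longrightarrow> sf c x \<in> G" using assms unfolding subalg_def by auto
  have one: "one \<in> embF sa G" unfolding embF_def one_def using G(1)
    by (intro CollectI exI[of _ 1] exI[of _ 0]) (simp add: sa_one)
  have add: "x + y \<in> embF sa G" if xin: "x \<in> embF sa G" and yin: "y \<in> embF sa G" for x y
  proof -
    obtain c f d g where "x = (sa c 1, f)" "f \<in> G" "y = (sa d 1, g)" "g \<in> G"
      using xin yin unfolding embF_def by blast
    then show ?thesis unfolding embF_def using G(2)
      by (intro CollectI exI[of _ "c + d"] exI[of _ "f + g"]) (simp add: sa_add2)
  qed
  have mul: "bm x y \<in> embF sa G" if xin: "x \<in> embF sa G" and yin: "y \<in> embF sa G" for x y
  proof -
    obtain c f d g where xy: "x = (sa c 1, f)" "f \<in> G" "y = (sa d 1, g)" "g \<in> G"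
      using xin yin unfolding embF_def by blast
    have "bm x y = (sa (c * d) 1, sf c g + sf d f + f * g)"
      using xy by (simp add: bm_Pair sa_1_mult la_sa ra_sa la_one ra_one)
    then show ?thesis unfolding embF_def using G xy
      by (intro CollectI exI[of _ "c * d"] exI[of _ "sf c g + sf d f + f * g"]) simp
  qed
  have sc: "bsc z x \<in> embF sa G" if xin: "x \<in> embF sa G" for z x
  proof -
    obtain c f where xy: "x = (sa c 1, f)" "f \<in> G" using xin unfolding embF_def by blast
    then show ?thesis unfolding embF_def using G(4)
      by (intro CollectI exI[of _ "z * c"] exI[of _ "sf z f"]) (simp add: bsc_def sa_sa)
  qed
  show ?thesis unfolding subalgB_def using one add mul sc by blast
qed

lemma embF_centered:
  assumes "b \<in> embF sa G" "pB b = 0" shows "fst b = 0 \<and> snd b \<in> G"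
proof -
  obtain c f where b: "b = (sa c 1, f)" "f \<in> G" using assms(1) unfolding embF_def by blast
  then have "c = 0" using assms(2) by (simp add: pB_def phiB_def)
  then show ?thesis using b by simp
qed

lemma zero_embF: "g \<in> G \<Longrightarrow> (0, g) \<in> embF sa G"
  unfolding embF_def by (intro CollectI exI[of _ 0] exI[of _ g]) simp

lemma subalg_gen_alg: "subalg sf (gen_alg sf S)"
  unfolding subalg_def by (auto intro: gen_alg.intros)

lemma H0A_from_free:
  assumes free: "free_family phi I A" and inj: "inj e"
    and Bf: "\<forall>i\<in>I. Bf (e i) = embA (A i)" and KA: "KA \<subseteq> e ` I"
  shows "\<forall>w. cw KA Bf w \<and> w \<noteq> [] \<longrightarrow> pB (wp w) = 0"
proof (intro allI impI)
  fix w assume w: "cw KA Bf w \<and> w \<noteq> []"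
  define ks where "ks = map (\<lambda>p. inv e (fst p)) w"
  define cs where "cs = map (\<lambda>p. fst (snd p)) w"
  have el: "\<exists>i\<in>I. fst p = e i \<and> snd p = (fst (snd p), 0) \<and> fst (snd p) \<in> A i \<and> phi (fst (snd p)) = 0"
    if "p \<in> set w" for p
  proof -
    have "fst p \<in> KA" "snd p \<in> Bf (fst p)" "pB (snd p) = 0" using w that by (auto simp: cw_def)
    then obtain i where i: "i \<in> I" "fst p = e i" using KA by auto
    then have "snd p \<in> embA (A i)" using Bf \<open>snd p \<in> Bf (fst p)\<close> by simp
    then obtain a where "snd p = (a, 0)" "a \<in> A i" unfolding embA_def by auto
    then show ?thesis using i \<open>pB (snd p) = 0\<close> by (auto simp: pB_def phiB_def)
  qed
  have "alternating ks"
  proof -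
    have ii: "inj_on (inv e) (set (map fst w))"
    proof (rule inj_on_inv_into)
      show "set (map fst w) \<subseteq> e ` UNIV" using w KA by (auto simp: cw_def)
    qed
    have A: "alternating (map (inv e) (map fst w)) = alternating (map fst w)" by (rule alt_map[OF ii])
    have "ks = map (inv e) (map fst w)" by (simp add: ks_def)
    then show ?thesis using A w by (simp add: cw_def)
  qed
  moreover have "\<forall>l < length ks. cs ! l \<in> A (ks ! l) \<and> phi (cs ! l) = 0"
  proof (intro allI impI)
    fix l assume "l < length ks"
    then have "w ! l \<in> set w" by (simp add: ks_def)
    then obtain i where "i \<in> I" "fst (w ! l) = e i" "fst (snd (w ! l)) \<in> A i" "phi (fst (snd (w ! l))) = 0"
      using el by blast
    then show "cs ! l \<in> A (ks ! l) \<and> phi (cs ! l) = 0" using \<open>l < length ks\<close> inj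
      by (simp add: ks_def cs_def)
  qed
  moreover have "set ks \<subseteq> I"
  proof
    fix i assume "i \<in> set ks"
    then obtain p where "p \<in> set w" "i = inv e (fst p)" by (auto simp: ks_def)
    moreover obtain i' where "i' \<in> I" "fst p = e i'" using el[OF \<open>p \<in> set w\<close>] by blast
    ultimately show "i \<in> I" using inj by simp
  qed
  moreover have "ks \<noteq> []" "length cs = length ks" using w by (simp_all add: ks_def cs_def)
  ultimately have "phi (prod_list cs) = 0" using free unfolding free_family_def by blast
  then show "pB (wp w) = 0" by (simp add: pB_def phiB_def fst_wp cs_def)
qed

lemma free_from_IF:
  assumes IF: "\<forall>ws. ws \<noteq> [] \<and> cw K Bf ws \<longrightarrow> pB (wp ws) = 0 \<and> pB' (wp ws) = pvw ws"
    and inj: "inj e" and Bf: "\<forall>i\<in>I. e i \<in> K \<and> Bf (e i) = embA (A i)"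
  shows "free_family phi I A"
  unfolding free_family_def
proof (intro allI impI)
  fix ks cs
  assume a: "ks \<noteq> [] \<and> length cs = length ks \<and> set ks \<subseteq> I \<and> alternating ks \<and>
        (\<forall>l < length ks. cs ! l \<in> A (ks ! l) \<and> phi (cs ! l) = 0)"
  define w where "w = zip (map e ks) (map (\<lambda>c. (c, 0::'f)) cs)"
  have mf: "map fst w = map e ks" and ms: "map snd w = map (\<lambda>c. (c, 0)) cs"
    using a by (simp_all add: w_def)
  have "cw K Bf w" unfolding cw_def
  proof
    have "inj_on e (set ks)" using inj by (rule inj_on_subset) simp
    then have "alternating (map e ks) = alternating ks" by (rule alt_map)
    then show "alternating (map fst w)" unfolding mf using a by simp
    show "\<forall>p\<in>set w. fst p \<in> K \<and> snd p \<in> Bf (fst p) \<and> pB (snd p) = 0"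
    proof
      fix p assume "p \<in> set w"
      then obtain l where l: "l < length ks" "p = (e (ks ! l), (cs ! l, 0))"
        using a unfolding w_def set_zip by auto
      then have kI: "ks ! l \<in> I" using a nth_mem by blast
      have c: "cs ! l \<in> A (ks ! l)" "phi (cs ! l) = 0" using a l by auto
      have "(cs ! l, 0) \<in> embA (A (ks ! l))" unfolding embA_def using c(1) by (rule imageI)
      then show "fst p \<in> K \<and> snd p \<in> Bf (fst p) \<and> pB (snd p) = 0"
        using l(2) Bf kI c(2) by (simp add: pB_def phiB_def)
    qed
  qed
  moreover have "w \<noteq> []" using a mf by auto
  ultimately have "pB (wp w) = 0" using IF by blast
  moreover have "map (\<lambda>p. fst (snd p)) w = cs"
  proof -
    have "map (\<lambda>p. fst (snd p)) w = map fst (map snd w)" by simp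
    also have "\<dots> = cs" unfolding ms by (simp add: comp_def)
    finally show ?thesis .
  qed
  then have "fst (wp w) = prod_list cs" unfolding fst_wp by simp
  ultimately show "phi (prod_list cs) = 0" by (simp add: pB_def phiB_def)
qed

end


context bctx
begin

lemma gen_unital_alg_embA:
  assumes "c \<in> gen_unital_alg sa (\<Union>i\<in>I. A i)"
    and Bf: "\<forall>i\<in>I. e i \<in> KA \<and> Bf (e i) = embA (A i)"
  shows "(c, 0) \<in> genB KA Bf"
  using assms(1)
proof (induction rule: gen_unital_alg.induct)
  case (gua_base x)
  then obtain i where "i \<in> I" "x \<in> A i" by auto
  then show ?case using Bf by (intro genB_base[of "e i"]) (auto simp: embA_def)
next
  case gua_one then show ?case using genB_one by (simp add: one_def)
next
  case (gua_add x y) then show ?case using genB_add by fastforce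
next
  case (gua_mult x y)
  have "bm (x, 0) (y, 0) = (x * y, 0)" by (simp add: bm_Pair)
  then show ?case using gua_mult genB_mult by metis
next
  case (gua_scale x c)
  have "bsc c (x, 0) = (sa c x, 0)" by (simp add: bsc_def)
  then show ?case using gua_scale genB_sc by metis
qed

lemma gen_alg_embF:
  assumes "g \<in> gen_alg sf (\<Union>j\<in>J. F j)"
    and Bf: "\<forall>j\<in>J. e j \<in> KF \<and> Bf (e j) = embF sa (F j)"
  shows "(0, g) \<in> genB KF Bf"
  using assms(1)
proof (induction rule: gen_alg.induct)
  case (ga_base x)
  then obtain j where "j \<in> J" "x \<in> F j" by auto
  then show ?case using Bf by (intro genB_base[of "e j"]) (auto intro: zero_embF)
next
  case ga_zero
  have "bsc 0 one = (0, 0)" by (simp add: zero_prod_def)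
  then show ?case using genB_sc[OF genB_one, where c=0 and K=KF and Bf=Bf] by simp
next
  case (ga_add x y) then show ?case using genB_add by fastforce
next
  case (ga_mult x y)
  have "bm (0, x) (0, y) = (0, x * y)" by (simp add: bm_Pair)
  then show ?case using ga_mult genB_mult by metis
next
  case (ga_scale x c)
  have "bsc c (0, x) = (0, sf c x)" by (simp add: bsc_def)
  then show ?case using ga_scale genB_sc by metis
qed

lemma wp_F_list:
  assumes "\<forall>p\<in>set G. fst (snd p) = 0" "G \<noteq> []"
  shows "wp G = (0, fprod (map (\<lambda>p. snd (snd p)) G))"
  using wpF[of G UNIV] assms by auto

lemma partA:
  fixes I :: "'i set" and A :: "'i \<Rightarrow> 'a set" and J :: "'j set" and F :: "'j \<Rightarrow> 'f set"
  assumes uA: "\<forall>i\<in>I. unital_subalg sa (A i)" and sF: "\<forall>j\<in>J. subalg sf (F j)"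
  shows "B'_free sa phi sf la ra Phi I A J F \<longleftrightarrow>
     inf_free la ra phi Phi (I <+> J) (\<lambda>k. case k of Inl i \<Rightarrow> embA (A i) | Inr j \<Rightarrow> embF sa (F j))"
proof -
  define K where "K = I <+> J"
  define Bf where "Bf = (\<lambda>k. case k of Inl i \<Rightarrow> embA (A i) | Inr j \<Rightarrow> embF sa (F j))"
  define isF where "isF = (\<lambda>k::'i + 'j. case k of Inl _ \<Rightarrow> False | Inr _ \<Rightarrow> True)"
  define AA where "AA = gen_unital_alg sa (\<Union>i\<in>I. A i)"
  define GG where "GG = gen_alg sf (\<Union>j\<in>J. F j)"
  have KA: "{k \<in> K. \<not> isF k} = Inl ` I" unfolding K_def isF_def
  proof (rule set_eqI)
    fix x :: "'i + 'j" show "(x \<in> {k \<in> I <+> J. \<not> (case k of Inl _ \<Rightarrow> False | Inr _ \<Rightarrow> True)}) = (x \<in> Inl ` I)"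
      by (cases x) auto
  qed
  have KF: "{k \<in> K. isF k} = Inr ` J" unfolding K_def isF_def
  proof (rule set_eqI)
    fix x :: "'i + 'j" show "(x \<in> {k \<in> I <+> J. (case k of Inl _ \<Rightarrow> False | Inr _ \<Rightarrow> True)}) = (x \<in> Inr ` J)"
      by (cases x) auto
  qed
  have sub: "\<forall>k\<in>K. subalgB (Bf k)"
    unfolding K_def Bf_def using uA sF subalgB_embA subalgB_embF by auto
  have TA: "\<forall>k\<in>K. \<not> isF k \<longrightarrow> (\<forall>b\<in>Bf k. snd b = 0 \<and> fst b \<in> AA)"
    unfolding K_def Bf_def isF_def AA_def embA_def by (auto intro!: gua_base)
  have TF: "\<forall>k\<in>K. isF k \<longrightarrow> (\<forall>b\<in>Bf k. pB b = 0 \<longrightarrow> fst b = 0 \<and> snd b \<in> GG)"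
  proof (intro ballI impI)
    fix k b assume "k \<in> K" "isF k" "b \<in> Bf k" "pB b = 0"
    then obtain j where j: "k = Inr j" "j \<in> J" unfolding K_def isF_def by (auto split: sum.splits)
    then have "fst b = 0 \<and> snd b \<in> F j" using embF_centered \<open>b \<in> Bf k\<close> \<open>pB b = 0\<close>
      unfolding Bf_def by simp
    then show "fst b = 0 \<and> snd b \<in> GG" using j unfolding GG_def by (auto intro: ga_base)
  qed
  have Fz: "\<forall>k\<in>K. isF k \<longrightarrow> (\<forall>b\<in>Bf k. pB b = 0 \<longrightarrow> fst b = 0)" using TF by blast
  have A1: "1 \<in> AA" unfolding AA_def by (rule gua_one)
  have Am: "\<forall>x\<in>AA. \<forall>y\<in>AA. x * y \<in> AA" unfolding AA_def by (auto intro: gua_mult)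
  have Gm: "\<forall>x\<in>GG. \<forall>y\<in>GG. x * y \<in> GG" unfolding GG_def by (auto intro: ga_mult)
  have BfA: "\<forall>i\<in>I. Bf (Inl i) = embA (A i)" by (simp add: Bf_def)
  have BfF: "\<forall>j\<in>J. Bf (Inr j) = embF sa (F j)" by (simp add: Bf_def)
  have Adir: "\<forall>c\<in>AA. (c, 0) \<in> genB {k \<in> K. \<not> isF k} Bf"
  proof
    fix c assume "c \<in> AA"
    then show "(c, 0) \<in> genB {k \<in> K. \<not> isF k} Bf" unfolding KA
      by (intro gen_unital_alg_embA[where e=Inl]) (use BfA in \<open>auto simp: AA_def\<close>)
  qed
  have Gdir: "\<forall>g\<in>GG. (0, g) \<in> genB {k \<in> K. isF k} Bf"
  proof
    fix g assume "g \<in> GG"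
    then show "(0, g) \<in> genB {k \<in> K. isF k} Bf" unfolding KF
      by (intro gen_alg_embF[where e=Inr]) (use BfF in \<open>auto simp: GG_def\<close>)
  qed
  show ?thesis unfolding K_def[symmetric] Bf_def[symmetric]
  proof
    assume "B'_free sa phi sf la ra Phi I A J F"
    then have free: "free_family phi I A" and CYC: "cyc_antimonotone phi la ra Phi AA GG"
      and triv: "trivially_independent Phi J F"
      unfolding B'_free_def weakly_B'_free_def AA_def GG_def by auto
    have H0A: "\<forall>w. cw {k \<in> K. \<not> isF k} Bf w \<and> w \<noteq> [] \<longrightarrow> pB (wp w) = 0"
      by (rule H0A_from_free[OF free]) (use BfA KA in auto)
    have HT: "\<forall>G. cw {k \<in> K. isF k} Bf G \<and> 2 \<le> length G \<longrightarrow> pB' (wp G) = 0"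
    proof (intro allI impI)
      fix G assume G: "cw {k \<in> K. isF k} Bf G \<and> 2 \<le> length G"
      have el: "\<exists>j\<in>J. fst p = Inr j \<and> fst (snd p) = 0 \<and> snd (snd p) \<in> F j" if "p \<in> set G" for p
      proof -
        have "fst p \<in> Inr ` J" "snd p \<in> Bf (fst p)" "pB (snd p) = 0" using G that KF
          by (auto simp: cw_def)
        then obtain j where "j \<in> J" "fst p = Inr j" by auto
        then show ?thesis using embF_centered[of "snd p" "F j"] \<open>snd p \<in> Bf (fst p)\<close> \<open>pB (snd p) = 0\<close>
          BfF by auto
      qed
      define js where "js = map (\<lambda>p. projr (fst p)) G"
      define gs where "gs = map (\<lambda>p. snd (snd p)) G"
      have "G \<noteq> []" using G by auto
      have wG: "wp G = (0, fprod gs)" unfolding gs_def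
        by (rule wp_F_list) (use el \<open>G \<noteq> []\<close> in auto)
      have "alternating js"
      proof -
        have xr: "\<forall>x\<in>set (map fst G). x = Inr (projr x)" using el by force
        have ii: "inj_on projr (set (map fst G))"
        proof (rule inj_onI)
          fix x y assume "x \<in> set (map fst G)" "y \<in> set (map fst G)" "projr x = projr y"
          then show "x = y" using xr by metis
        qed
        have "alternating (map projr (map fst G)) = alternating (map fst G)" by (rule alt_map[OF ii])
        moreover have "js = map projr (map fst G)" by (simp add: js_def)
        ultimately show ?thesis using G by (simp add: cw_def)
      qed
      moreover have "set js \<subseteq> J" using el by (force simp: js_def)
      moreover have "\<forall>l < length js. gs ! l \<in> F (js ! l)"
      proof (intro allI impI)
        fix l assume l: "l < length js"
        then have "G ! l \<in> set G" by (simp add: js_def)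
        then obtain j where "fst (G ! l) = Inr j" "snd (snd (G ! l)) \<in> F j" using el by blast
        then show "gs ! l \<in> F (js ! l)" using l by (simp add: js_def gs_def)
      qed
      moreover have "2 \<le> length js" "length gs = length js" using G by (simp_all add: js_def gs_def)
      ultimately have "Phi (fprod gs) = 0" using triv unfolding trivially_independent_def by blast
      then show "pB' (wp G) = 0" using wG by (simp add: pB'_def phiB'_def)
    qed
    have "\<forall>ws. ws \<noteq> [] \<and> cw K Bf ws \<longrightarrow> pB (wp ws) = 0 \<and> pB' (wp ws) = pvw ws"
      by (rule inf_from_cyc[OF sub TA TF A1 Am Gm CYC H0A HT])
    then show "inf_free la ra phi Phi K Bf" by (simp add: inf_free_ws)
  next
    assume "inf_free la ra phi Phi K Bf"
    then have IF: "\<forall>ws. ws \<noteq> [] \<and> cw K Bf ws \<longrightarrow> pB (wp ws) = 0 \<and> pB' (wp ws) = pvw ws"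
      by (simp add: inf_free_ws)
    have free: "free_family phi I A"
      by (rule free_from_IF[OF IF]) (use BfA in \<open>auto simp: K_def\<close>)
    have CYC: "cyc_antimonotone phi la ra Phi AA GG"
      by (rule cyc_from_inf[OF sub Fz IF Adir Gdir Gm])
    have triv: "trivially_independent Phi J F"
      unfolding trivially_independent_def
    proof (intro allI impI)
      fix js gs
      assume a: "2 \<le> length js \<and> length gs = length js \<and> set js \<subseteq> J \<and> alternating js \<and>
        (\<forall>l < length js. gs ! l \<in> F (js ! l))"
      define w where "w = zip (map Inr js :: ('i + 'j) list) (map (\<lambda>g. (0::'a, g)) gs)"
      have mf: "map fst w = map Inr js" and ms: "map snd w = map (\<lambda>g. (0, g)) gs"
        using a by (simp_all add: w_def)
      have cw: "cw K Bf w" unfolding cw_def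
      proof
        have "alternating (map Inr js :: ('i + 'j) list) = alternating js" by (rule alt_map) simp
        then show "alternating (map fst w)" unfolding mf using a by simp
        show "\<forall>p\<in>set w. fst p \<in> K \<and> snd p \<in> Bf (fst p) \<and> pB (snd p) = 0"
        proof
          fix p assume "p \<in> set w"
          then obtain l where l: "l < length js" "p = (Inr (js ! l), (0, gs ! l))"
            using a unfolding w_def set_zip by auto
          then have jJ: "js ! l \<in> J" using a nth_mem by blast
          have "(0, gs ! l) \<in> embF sa (F (js ! l))" using a l by (intro zero_embF) auto
          then show "fst p \<in> K \<and> snd p \<in> Bf (fst p) \<and> pB (snd p) = 0"
            using l jJ by (simp add: K_def Bf_def pB_def phiB_def Plus_def)
        qed
      qed
      have wne: "w \<noteq> []" using a mf by auto
      have F0: "\<forall>p\<in>set w. isF (fst p) \<longrightarrow> fst (snd p) = 0"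
      proof
        fix p assume "p \<in> set w"
        then have "snd p \<in> set (map snd w)" by simp
        then show "isF (fst p) \<longrightarrow> fst (snd p) = 0" unfolding ms by auto
      qed
      have allF: "\<forall>p\<in>set w. isF (fst p)"
      proof
        fix p assume "p \<in> set w"
        then have "fst p \<in> set (map fst w)" by simp
        then show "isF (fst p)" unfolding mf isF_def by auto
      qed
      have lw: "2 \<le> length w" using a by (simp add: w_def)
      obtain p0 w' where w1: "w = p0 # w'" using lw by (cases w) auto
      obtain p1 rest where w2: "w' = p1 # rest" using lw w1 by (cases w') auto
      have w3: "w = p0 # p1 # rest" using w1 w2 by simp
      have "pvw w = 0"
        by (rule PAL0[OF F0, of "[]" p0 "[]" p1 rest]) (use w3 allF in auto)
      then have "pB' (wp w) = 0" using IF cw wne by simp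
      moreover have "wp w = (0, fprod gs)"
      proof -
        have "\<forall>p\<in>set w. fst (snd p) = 0" using F0 allF by blast
        then have "wp w = (0, fprod (map (\<lambda>p. snd (snd p)) w))" using wp_F_list wne by blast
        moreover have "map (\<lambda>p. snd (snd p)) w = gs"
        proof -
          have "map (\<lambda>p. snd (snd p)) w = map snd (map snd w)" by simp
          also have "\<dots> = gs" unfolding ms by (simp add: comp_def)
          finally show ?thesis .
        qed
        ultimately show ?thesis by simp
      qed
      ultimately show "Phi (fprod gs) = 0" by (simp add: pB'_def phiB'_def)
    qed
    show "B'_free sa phi sf la ra Phi I A J F"
      unfolding B'_free_def weakly_B'_free_def using free CYC triv unfolding AA_def GG_def by simp
  qed
qed

lemma partB:
  fixes I :: "'i set" and A :: "'i \<Rightarrow> 'a set" and J :: "'j set" and F :: "'j \<Rightarrow> 'f set"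
  assumes uA: "\<forall>i\<in>I. unital_subalg sa (A i)"
  shows "weakly_B'_free sa phi sf la ra Phi I A J F \<longleftrightarrow>
     inf_free la ra phi Phi (Some ` I \<union> {None})
       (\<lambda>k. case k of Some i \<Rightarrow> embA (A i) | None \<Rightarrow> embF sa (gen_alg sf (\<Union>j\<in>J. F j)))"
proof -
  define K where "K = Some ` I \<union> {None}"
  define AA where "AA = gen_unital_alg sa (\<Union>i\<in>I. A i)"
  define GG where "GG = gen_alg sf (\<Union>j\<in>J. F j)"
  define Bf where "Bf = (\<lambda>k. case k of Some i \<Rightarrow> embA (A i) | None \<Rightarrow> embF sa GG)"
  define isF where "isF = (\<lambda>k::'i option. k = None)"
  have KA: "{k \<in> K. \<not> isF k} = Some ` I" unfolding K_def isF_def by auto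
  have KF: "{k \<in> K. isF k} = {None}" unfolding K_def isF_def by auto
  have sub: "\<forall>k\<in>K. subalgB (Bf k)"
    unfolding K_def Bf_def GG_def using uA subalgB_embA subalgB_embF[OF subalg_gen_alg] by auto
  have TA: "\<forall>k\<in>K. \<not> isF k \<longrightarrow> (\<forall>b\<in>Bf k. snd b = 0 \<and> fst b \<in> AA)"
    unfolding K_def Bf_def isF_def AA_def embA_def by (auto intro!: gua_base)
  have TF: "\<forall>k\<in>K. isF k \<longrightarrow> (\<forall>b\<in>Bf k. pB b = 0 \<longrightarrow> fst b = 0 \<and> snd b \<in> GG)"
    unfolding isF_def Bf_def using embF_centered by auto
  have Fz: "\<forall>k\<in>K. isF k \<longrightarrow> (\<forall>b\<in>Bf k. pB b = 0 \<longrightarrow> fst b = 0)" using TF by blast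
  have A1: "1 \<in> AA" unfolding AA_def by (rule gua_one)
  have Am: "\<forall>x\<in>AA. \<forall>y\<in>AA. x * y \<in> AA" unfolding AA_def by (auto intro: gua_mult)
  have Gm: "\<forall>x\<in>GG. \<forall>y\<in>GG. x * y \<in> GG" unfolding GG_def by (auto intro: ga_mult)
  have BfA: "\<forall>i\<in>I. Bf (Some i) = embA (A i)" by (simp add: Bf_def)
  have Adir: "\<forall>c\<in>AA. (c, 0) \<in> genB {k \<in> K. \<not> isF k} Bf"
  proof
    fix c assume "c \<in> AA"
    then show "(c, 0) \<in> genB {k \<in> K. \<not> isF k} Bf" unfolding KA
      by (intro gen_unital_alg_embA[where e=Some]) (use BfA in \<open>auto simp: AA_def\<close>)
  qed
  have Gdir: "\<forall>g\<in>GG. (0, g) \<in> genB {k \<in> K. isF k} Bf"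
  proof
    fix g assume "g \<in> GG"
    then have "(0, g) \<in> Bf None" unfolding Bf_def by (simp add: zero_embF)
    then show "(0, g) \<in> genB {k \<in> K. isF k} Bf" unfolding KF by (intro genB_base) auto
  qed
  show ?thesis unfolding K_def[symmetric] GG_def[symmetric] Bf_def[symmetric]
  proof
    assume "weakly_B'_free sa phi sf la ra Phi I A J F"
    then have free: "free_family phi I A" and CYC: "cyc_antimonotone phi la ra Phi AA GG"
      unfolding weakly_B'_free_def AA_def GG_def by auto
    have H0A: "\<forall>w. cw {k \<in> K. \<not> isF k} Bf w \<and> w \<noteq> [] \<longrightarrow> pB (wp w) = 0"
      by (rule H0A_from_free[OF free, where e=Some]) (use BfA KA in auto)
    have HT: "\<forall>G. cw {k \<in> K. isF k} Bf G \<and> 2 \<le> length G \<longrightarrow> pB' (wp G) = 0"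
    proof (intro allI impI)
      fix G assume G: "cw {k \<in> K. isF k} Bf G \<and> 2 \<le> length G"
      obtain p0 G' where g1: "G = p0 # G'" using G by (cases G) auto
      obtain p1 rest where g2: "G' = p1 # rest" using G g1 by (cases G') auto
      have "fst p0 = None" "fst p1 = None" using G g1 g2 KF by (auto simp: cw_def)
      moreover have "fst p0 \<noteq> fst p1" using G g1 g2 by (auto simp: cw_def)
      ultimately show "pB' (wp G) = 0" by simp
    qed
    have "\<forall>ws. ws \<noteq> [] \<and> cw K Bf ws \<longrightarrow> pB (wp ws) = 0 \<and> pB' (wp ws) = pvw ws"
      by (rule inf_from_cyc[OF sub TA TF A1 Am Gm CYC H0A HT])
    then show "inf_free la ra phi Phi K Bf" by (simp add: inf_free_ws)
  next
    assume "inf_free la ra phi Phi K Bf"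
    then have IF: "\<forall>ws. ws \<noteq> [] \<and> cw K Bf ws \<longrightarrow> pB (wp ws) = 0 \<and> pB' (wp ws) = pvw ws"
      by (simp add: inf_free_ws)
    have free: "free_family phi I A"
      by (rule free_from_IF[OF IF, where e=Some]) (use BfA in \<open>auto simp: K_def\<close>)
    have CYC: "cyc_antimonotone phi la ra Phi AA GG"
      by (rule cyc_from_inf[OF sub Fz IF Adir Gdir Gm])
    show "weakly_B'_free sa phi sf la ra Phi I A J F"
      unfolding weakly_B'_free_def using free CYC unfolding AA_def GG_def by simp
  qed
qed

end

theorem theorem3p5:
  fixes sa :: "complex \<Rightarrow> 'a::ring_1 \<Rightarrow> 'a" and phi :: "'a \<Rightarrow> complex"
    and sf :: "complex \<Rightarrow> 'f::ring \<Rightarrow> 'f"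
    and la :: "'a \<Rightarrow> 'f \<Rightarrow> 'f" and ra :: "'f \<Rightarrow> 'a \<Rightarrow> 'f" and Phi :: "'f \<Rightarrow> complex"
    and I :: "'i set" and A :: "'i \<Rightarrow> 'a set" and J :: "'j set" and F :: "'j \<Rightarrow> 'f set"
  assumes "ncps_B' sa phi sf la ra Phi"
    and "\<forall>i\<in>I. unital_subalg sa (A i)"
    and "\<forall>j\<in>J. subalg sf (F j)"
  shows "(B'_free sa phi sf la ra Phi I A J F \<longleftrightarrow>
            inf_free la ra phi Phi (I <+> J)
              (\<lambda>k. case k of Inl i \<Rightarrow> embA (A i) | Inr j \<Rightarrow> embF sa (F j)))
       \<and> (weakly_B'_free sa phi sf la ra Phi I A J F \<longleftrightarrow>
            inf_free la ra phi Phi (Some ` I \<union> {None})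
              (\<lambda>k. case k of Some i \<Rightarrow> embA (A i)
                           | None \<Rightarrow> embF sa (gen_alg sf (\<Union>j\<in>J. F j))))"
proof -
  interpret bctx sa phi sf la ra Phi by unfold_locales (rule assms(1))
  show ?thesis using partA[OF assms(2,3)] partB[OF assms(2)] by blast
qed


end
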